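(* Let $f:\mathbb{R}^d\to\mathbb{R}$ satisfy the Standing Assumptions with constants $0<\mu\le L$ and $M>0$, and let $\{x_t\},\{G_t\},\{J_t\}$ be generated by General Sharpened-BFGS from an initial point $x_0$ with $$\lambda_0\le\frac{C_0\mu}{ML},\qquad C_0=\frac14\ln\frac32,$$ assuming $\nabla f(x_t)\ne0$ for all $t$ considered. Then for all $t\ge0$, $$\theta(J_t,G_t,x_{t+1}-x_t)\le1-\frac{2\mu}{3L}\qquad\text{and}\qquad \lambda_t\le\left(1-\frac{\mu}{2L}\right)^t\lambda_0,$$ where $\lambda_t:=\lambda_f(x_t)$.
   Context: Standing Assumptions: $f$ is twice differentiable, $\mu$-strongly convex and has $L$-Lipschitz gradient, and is strongly self-concordant with constant $M>0$: for all $x,y,z,w\in\mathbb{R}^d$, $\nabla^2f(y)-\nabla^2f(x)\preceq M\|y-x\|_z\nabla^2f(w)$, where $\|h\|_z:=\sqrt{h^\top\nabla^2f(z)h}$. Newton decrement: $\lambda_f(x):=\sqrt{\nabla f(x)^\top\nabla^2f(x)^{-1}\nabla f(x)}$. $\theta(A,G,u):=\left(\frac{u^\top (G-A)A^{-1}(G-A)u}{u^\top GA^{-1}Gu}\right)^{1/2}$. For symmetric positive definite $A,G$ and $u\ne0$, $\mathrm{BFGS}(A,G,u):=G-\frac{Guu^\top G}{u^\top Gu}+\frac{Auu^\top A}{u^\top Au}$, and $\bar u(A,G):=\arg\max_{u\in\{e_1,\dots,e_d\}}\frac{u^\top Gu}{u^\top Au}$ (ties broken arbitrarily). General Sharpened-BFGS: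 set $G_0=LI$; for $t=0,1,2,\dots$: $x_{t+1}=x_t-G_t^{-1}\nabla f(x_t)$; $s_t=x_{t+1}-x_t$; $J_t=\int_0^1\nabla^2f(x_t+\tau s_t)\,d\tau$; $\bar G_t=\mathrm{BFGS}(J_t,G_t,s_t)$; $r_t=\|s_t\|_{x_t}$; $\hat G_t=(1+Mr_t/2)^2\bar G_t$; $\bar u=\bar u(\nabla^2f(x_{t+1}),\hat G_t)$; $G_{t+1}=\mathrm{BFGS}(\nabla^2f(x_{t+1}),\hat G_t,\bar u)$. *)

theory Defs
  imports "HOL-Analysis.Analysis"
begin

definition strongly_convex :: "real \<Rightarrow> ('a::real_normed_vector \<Rightarrow> real) \<Rightarrow> bool" where
  "strongly_convex mu f \<longleftrightarrow>
     (\<forall>x y. \<forall>t::real. 0 \<le> t \<and> t \<le> 1 \<longrightarrow>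
        f (t *\<^sub>R x + (1 - t) *\<^sub>R y)
          \<le> t * f x + (1 - t) * f y - mu / 2 * t * (1 - t) * (norm (x - y))\<^sup>2)"

definition loewner_le :: "real^'n^'n \<Rightarrow> real^'n^'n \<Rightarrow> bool" where
  "loewner_le A B \<longleftrightarrow> (\<forall>h. h \<bullet> (A *v h) \<le> h \<bullet> (B *v h))"

definition local_norm :: "(real^'n \<Rightarrow> real^'n^'n) \<Rightarrow> real^'n \<Rightarrow> real^'n \<Rightarrow> real" where
  "local_norm H z h = sqrt (h \<bullet> (H z *v h))"

definition strongly_self_concordant :: "real \<Rightarrow> (real^'n \<Rightarrow> real^'n^'n) \<Rightarrow> bool" where
  "strongly_self_concordant M H \<longleftrightarrow>
     (\<forall>x y z w. loewner_le (H y - H x) ((M * local_norm H z (y - x)) *\<^sub>R H w))"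

definition newton_decrement :: "(real^'n \<Rightarrow> real^'n) \<Rightarrow> (real^'n \<Rightarrow> real^'n^'n) \<Rightarrow> real^'n \<Rightarrow> real" where
  "newton_decrement g H x = sqrt (g x \<bullet> (matrix_inv (H x) *v g x))"

definition outer :: "real^'n \<Rightarrow> real^'n \<Rightarrow> real^'n^'n" where
  "outer u v = (\<chi> i j. u $ i * v $ j)"

definition theta :: "real^'n^'n \<Rightarrow> real^'n^'n \<Rightarrow> real^'n \<Rightarrow> real" where
  "theta A G u = sqrt ((u \<bullet> (((G - A) ** matrix_inv A ** (G - A)) *v u))
                      / (u \<bullet> ((G ** matrix_inv A ** G) *v u)))"

definition BFGS :: "real^'n^'n \<Rightarrow> real^'n^'n \<Rightarrow> real^'n \<Rightarrow> real^'n^'n" where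
  "BFGS A G u = G - (1 / (u \<bullet> (G *v u))) *\<^sub>R (G ** outer u u ** G)
                  + (1 / (u \<bullet> (A *v u))) *\<^sub>R (A ** outer u u ** A)"

definition greedy_dir :: "real^'n^'n \<Rightarrow> real^'n^'n \<Rightarrow> real^'n \<Rightarrow> bool" where
  "greedy_dir A G u \<longleftrightarrow> (\<exists>i. u = axis i 1) \<and>
     (\<forall>j. (axis j 1 \<bullet> (G *v axis j 1)) / (axis j 1 \<bullet> (A *v axis j 1))
          \<le> (u \<bullet> (G *v u)) / (u \<bullet> (A *v u)))"

end

theory Submission
  imports Defs
begin



definition qf :: "real^'n^'n \<Rightarrow> real^'n \<Rightarrow> real" where
  "qf A v = v \<bullet> (A *v v)"

definition symv :: "real^'n^'n \<Rightarrow> bool" where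
  "symv A \<longleftrightarrow> (\<forall>x y. x \<bullet> (A *v y) = y \<bullet> (A *v x))"

lemma qf_add: "qf (A + B) v = qf A v + qf B v"
  by (simp add: qf_def matrix_vector_mult_add_rdistrib inner_add_right)
lemma qf_diff: "qf (A - B) v = qf A v - qf B v"
  by (simp add: qf_def matrix_vector_mult_diff_rdistrib inner_diff_right)
lemma qf_scale: "qf (c *\<^sub>R A) v = c * qf A v"
  by (simp add: qf_def scaleR_matrix_vector_assoc[symmetric])
lemma qf_mat1: "qf (mat 1) v = (norm v)\<^sup>2"
  by (simp add: qf_def power2_norm_eq_inner)
lemma qf_scale_vec: "qf A (c *\<^sub>R v) = c\<^sup>2 * qf A v"
  by (simp add: qf_def matrix_vector_mult_scaleR power2_eq_square)

lemma loewner_le_qf: "loewner_le A B \<longleftrightarrow> (\<forall>h. qf A h \<le> qf B h)"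
  by (simp add: loewner_le_def qf_def)

lemma symv_add: "symv A \<Longrightarrow> symv B \<Longrightarrow> symv (A + B)"
  by (simp add: symv_def matrix_vector_mult_add_rdistrib inner_add_right)
lemma symv_diff: "symv A \<Longrightarrow> symv B \<Longrightarrow> symv (A - B)"
  by (simp add: symv_def matrix_vector_mult_diff_rdistrib inner_diff_right)
lemma symv_scale: "symv A \<Longrightarrow> symv (c *\<^sub>R A)"
  by (simp add: symv_def scaleR_matrix_vector_assoc[symmetric])
lemma symv_mat1: "symv (mat 1)"
  by (simp add: symv_def inner_commute)

lemma qf_expand:
  assumes "symv A"
  shows "qf A (x + t *\<^sub>R y) = qf A x + 2 * t * (x \<bullet> (A *v y)) + t\<^sup>2 * qf A y"
proof -
  have "y \<bullet> (A *v x) = x \<bullet> (A *v y)" using assms by (simp add: symv_def)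
  then show ?thesis
    by (simp add: qf_def matrix_vector_right_distrib matrix_vector_mult_scaleR
        inner_add_left inner_add_right algebra_simps power2_eq_square)
qed

lemma qf_expand_diff:
  assumes "symv A"
  shows "qf A (x - y) = qf A x - 2 * (x \<bullet> (A *v y)) + qf A y"
  using qf_expand[OF assms, of x "-1" y] by simp

lemma cs_form:
  assumes "symv A" and psd: "\<And>v. qf A v \<ge> 0"
  shows "(x \<bullet> (A *v y))\<^sup>2 \<le> qf A x * qf A y"
proof -
  define b where "b = x \<bullet> (A *v y)"
  have q: "\<And>t. qf A x + 2 * t * b + t\<^sup>2 * qf A y \<ge> 0"
    using psd qf_expand[OF assms(1)] b_def by metis
  show ?thesis
  proof (cases "qf A y = 0")
    case True
    have "b = 0"
    proof (rule ccontr)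
      assume "b \<noteq> 0"
      have "qf A x + 2 * (- (qf A x + 1) / (2 * b)) * b + (- (qf A x + 1) / (2 * b))\<^sup>2 * qf A y \<ge> 0"
        using q by blast
      then show False using True \<open>b \<noteq> 0\<close> by (simp add: field_simps)
    qed
    then show ?thesis using True b_def by simp
  next
    case False
    then have pos: "qf A y > 0" using psd[of y] by simp
    have "qf A x + 2 * (- b / qf A y) * b + (- b / qf A y)\<^sup>2 * qf A y \<ge> 0" using q by blast
    then have "qf A x - b\<^sup>2 / qf A y \<ge> 0" using pos by (simp add: field_simps power2_eq_square)
    then have "b\<^sup>2 \<le> qf A x * qf A y" using pos by (simp add: field_simps)
    then show ?thesis using b_def by simp
  qed
qed

definition pdm :: "real^'n^'n \<Rightarrow> bool" where
  "pdm A \<longleftrightarrow> symv A \<and> (\<forall>v. v \<noteq> 0 \<longrightarrow> qf A v > 0)"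

lemma pdm_psd: "pdm A \<Longrightarrow> qf A v \<ge> 0"
  unfolding pdm_def by (cases "v = 0") (auto simp: qf_def less_imp_le)

lemma pdm_invertible:
  assumes "pdm A" shows "invertible A"
proof -
  have "\<forall>x. A *v x = 0 \<longrightarrow> x = 0"
    using assms unfolding pdm_def qf_def by fastforce
  then show ?thesis
    using matrix_left_invertible_ker invertible_left_inverse by blast
qed

lemma inv_props:
  assumes "invertible A"
  shows "A ** matrix_inv A = mat 1" "matrix_inv A ** A = mat 1"
  using assms unfolding invertible_def matrix_inv_def by (metis (mono_tags, lifting) someI)+

lemma inv_vec:
  assumes "invertible A"
  shows "A *v (matrix_inv A *v v) = v" "matrix_inv A *v (A *v v) = v"
  using inv_props[OF assms] by (simp_all add: matrix_vector_mul_assoc)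

lemma pdm_inv_symv:
  assumes "pdm A" shows "symv (matrix_inv A)"
proof -
  have inv: "invertible A" using pdm_invertible assms by blast
  have s: "symv A" using assms pdm_def by blast
  show ?thesis unfolding symv_def
  proof (intro allI)
    fix x y
    have "x \<bullet> (matrix_inv A *v y) = (A *v (matrix_inv A *v x)) \<bullet> (matrix_inv A *v y)"
      using inv_vec[OF inv] by simp
    also have "\<dots> = (matrix_inv A *v y) \<bullet> (A *v (matrix_inv A *v x))" by (simp add: inner_commute)
    also have "\<dots> = (matrix_inv A *v x) \<bullet> (A *v (matrix_inv A *v y))"
      using s unfolding symv_def by metis
    also have "\<dots> = y \<bullet> (matrix_inv A *v x)" using inv_vec[OF inv] by (simp add: inner_commute)
    finally show "x \<bullet> (matrix_inv A *v y) = y \<bullet> (matrix_inv A *v x)" .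
  qed
qed

lemma pdm_inv_qf:
  assumes "pdm A" shows "qf (matrix_inv A) v = qf A (matrix_inv A *v v)"
proof -
  have inv: "invertible A" using pdm_invertible assms by blast
  show ?thesis unfolding qf_def using inv_vec[OF inv] by (simp add: inner_commute)
qed

lemma pdm_inv_pdm:
  assumes "pdm A" shows "pdm (matrix_inv A)"
proof -
  have inv: "invertible A" using pdm_invertible assms by blast
  { fix v :: "real^'a" assume "v \<noteq> 0"
    then have "matrix_inv A *v v \<noteq> 0" using inv_vec[OF inv] by (metis matrix_vector_mult_0_right)
    then have "qf (matrix_inv A) v > 0" using assms pdm_inv_qf[OF assms] unfolding pdm_def by simp }
  then show ?thesis using pdm_inv_symv[OF assms] unfolding pdm_def by blast
qed

lemma inv_antitone:
  assumes A: "pdm A" and B: "pdm B" and c: "c > 0" and le: "\<And>h. qf A h \<le> c * qf B h"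
  shows "qf (matrix_inv B) v \<le> c * qf (matrix_inv A) v"
proof -
  have iA: "invertible A" and iB: "invertible B" using pdm_invertible A B by blast+
  define w where "w = matrix_inv B *v v"
  define z where "z = matrix_inv A *v v"
  define X where "X = qf (matrix_inv B) v"
  define Y where "Y = qf (matrix_inv A) v"
  have X0: "X \<ge> 0" using pdm_psd[OF pdm_inv_pdm[OF B]] X_def by simp
  have "X = w \<bullet> v" unfolding X_def w_def qf_def by (simp add: inner_commute)
  also have "\<dots> = w \<bullet> (A *v z)" unfolding z_def using inv_vec[OF iA] by simp
  finally have Xe: "X = w \<bullet> (A *v z)" .
  have "X\<^sup>2 \<le> qf A w * qf A z" unfolding Xe
    by (rule cs_form) (use A pdm_def pdm_psd in auto)
  also have "qf A z = Y" unfolding Y_def z_def using pdm_inv_qf[OF A] by simp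
  also have "qf A w * Y \<le> c * qf B w * Y"
    using le[of w] pdm_psd[OF pdm_inv_pdm[OF A], of v] Y_def by (simp add: mult_right_mono)
  also have "qf B w = X" unfolding X_def w_def using pdm_inv_qf[OF B] by simp
  finally have "X * X \<le> X * (c * Y)" by (simp add: power2_eq_square algebra_simps)
  then have "X \<le> c * Y" using X0
    by (cases "X = 0") (use c pdm_psd[OF pdm_inv_pdm[OF A], of v] Y_def in auto)
  then show ?thesis using X_def Y_def by simp
qed




lemma outer_mv: "outer u u *v w = (u \<bullet> w) *\<^sub>R u"
  by (simp add: outer_def matrix_vector_mult_def vec_eq_iff inner_vec_def sum_distrib_left mult.commute mult.left_commute)

lemma rank1_mv: "(G ** outer u u ** G) *v v = (u \<bullet> (G *v v)) *\<^sub>R (G *v u)"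
  by (simp add: matrix_vector_mul_assoc[symmetric] outer_mv matrix_vector_mult_scaleR)

lemma BFGS_mv: "BFGS A G u *v v = G *v v - ((u \<bullet> (G *v v)) / qf G u) *\<^sub>R (G *v u)
     + ((u \<bullet> (A *v v)) / qf A u) *\<^sub>R (A *v u)"
  by (simp add: BFGS_def qf_def matrix_vector_mult_add_rdistrib matrix_vector_mult_diff_rdistrib
      scaleR_matrix_vector_assoc[symmetric] rank1_mv)

lemma BFGS_symv:
  assumes "symv A" "symv G" shows "symv (BFGS A G u)"
  unfolding symv_def BFGS_mv
  using assms unfolding symv_def by (simp add: inner_add_right inner_diff_right) (metis mult.commute)

lemma BFGS_qf:
  assumes "symv A" "symv G"
  shows "qf (BFGS A G u) v = qf G v - (u \<bullet> (G *v v))\<^sup>2 / qf G u + (u \<bullet> (A *v v))\<^sup>2 / qf A u"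
proof -
  have "v \<bullet> (G *v u) = u \<bullet> (G *v v)" "v \<bullet> (A *v u) = u \<bullet> (A *v v)"
    using assms unfolding symv_def by metis+
  then show ?thesis
    by (simp add: qf_def BFGS_mv inner_add_right inner_diff_right power2_eq_square)
qed

definition projq :: "real^'n^'n \<Rightarrow> real^'n \<Rightarrow> real^'n \<Rightarrow> real" where
  "projq X u v = qf X v - (u \<bullet> (X *v v))\<^sup>2 / qf X u"

lemma projq_le:
  assumes "symv X" "qf X u > 0"
  shows "projq X u v \<le> qf X (v - a *\<^sub>R u)"
proof -
  have e: "qf X (v - a *\<^sub>R u) = qf X v + 2 * (-a) * (v \<bullet> (X *v u)) + (-a)\<^sup>2 * qf X u"
    using qf_expand[OF assms(1), of v "-a" u] by simp
  have s: "v \<bullet> (X *v u) = u \<bullet> (X *v v)" using assms(1) unfolding symv_def by metis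
  define b where "b = u \<bullet> (X *v v)"
  define c where "c = qf X u"
  have "b\<^sup>2 / c - 2 * a * b + a\<^sup>2 * c = (a * c - b)\<^sup>2 / c" using assms(2) c_def
    by (simp add: field_simps power2_eq_square)
  also have "\<dots> \<ge> 0" using assms(2) c_def by simp
  finally have "- (b\<^sup>2 / c) \<le> - 2 * a * b + a\<^sup>2 * c" by linarith
  then show ?thesis unfolding projq_def e s b_def[symmetric] c_def[symmetric] by simp
qed

lemma projq_eq:
  assumes "symv X" "qf X u > 0"
  shows "projq X u v = qf X (v - ((u \<bullet> (X *v v)) / qf X u) *\<^sub>R u)"
proof -
  have e: "qf X (v - a *\<^sub>R u) = qf X v + 2 * (-a) * (v \<bullet> (X *v u)) + (-a)\<^sup>2 * qf X u" for a
    using qf_expand[OF assms(1), of v "-a" u] by simp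
  have s: "v \<bullet> (X *v u) = u \<bullet> (X *v v)" using assms(1) unfolding symv_def by metis
  show ?thesis unfolding projq_def e s using assms(2)
    by (simp add: field_simps power2_eq_square)
qed

lemma projq_mono:
  assumes "symv X" "symv Y" "qf X u > 0" "qf Y u > 0" "\<And>h. qf X h \<le> qf Y h"
  shows "projq X u v \<le> projq Y u v"
  using projq_le[OF assms(1,3)] projq_eq[OF assms(2,4)] assms(5) by (metis order_trans)

lemma projq_scale:
  assumes "c > 0" shows "projq (c *\<^sub>R X) u v = c * projq X u v"
  using assms by (simp add: projq_def qf_scale scaleR_matrix_vector_assoc[symmetric] power2_eq_square field_simps)

lemma rank_term_bounds:
  assumes "symv A" "\<And>h. qf A h \<ge> 0" "qf A u > 0"
  shows "(u \<bullet> (A *v v))\<^sup>2 / qf A u \<ge> 0" "(u \<bullet> (A *v v))\<^sup>2 / qf A u \<le> qf A v"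
proof -
  show "(u \<bullet> (A *v v))\<^sup>2 / qf A u \<ge> 0" using assms(3) by simp
  have "(u \<bullet> (A *v v))\<^sup>2 \<le> qf A u * qf A v" by (rule cs_form[OF assms(1,2)])
  then show "(u \<bullet> (A *v v))\<^sup>2 / qf A u \<le> qf A v" using assms(3) by (simp add: field_simps)
qed

lemma BFGS_bounds:
  assumes sA: "symv A" and sG: "symv G" and psd: "\<And>h. qf A h \<ge> 0" and u: "qf A u > 0"
    and b: "0 < \<beta>" "\<beta> \<le> 1" "1 \<le> \<eta>"
    and lo: "\<And>h. \<beta> * qf A h \<le> qf G h" and hi: "\<And>h. qf G h \<le> \<eta> * qf A h"
  shows "\<beta> * qf A v \<le> qf (BFGS A G u) v" "qf (BFGS A G u) v \<le> \<eta> * qf A v"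
proof -
  have Gu: "qf G u > 0" using lo[of u] u b by (smt (verit) mult_pos_pos)
  have e: "qf (BFGS A G u) v = projq G u v + (u \<bullet> (A *v v))\<^sup>2 / qf A u"
    using BFGS_qf[OF sA sG] by (simp add: projq_def)
  have pA: "projq A u v = qf A v - (u \<bullet> (A *v v))\<^sup>2 / qf A u" by (simp add: projq_def)
  note r = rank_term_bounds[OF sA psd u, of v]
  have "projq G u v \<le> projq (\<eta> *\<^sub>R A) u v"
    by (rule projq_mono) (use sG sA symv_scale Gu u b hi in \<open>auto simp: qf_scale intro: mult_pos_pos\<close>)
  also have "\<dots> = \<eta> * projq A u v" using b by (intro projq_scale) simp
  finally have 1: "projq G u v \<le> \<eta> * projq A u v" .
  have "\<beta> * projq A u v = projq (\<beta> *\<^sub>R A) u v" using b by (intro projq_scale[symmetric]) simp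
  also have "\<dots> \<le> projq G u v"
    by (rule projq_mono) (use sG sA symv_scale Gu u b lo in \<open>auto simp: qf_scale intro: mult_pos_pos\<close>)
  finally have 2: "\<beta> * projq A u v \<le> projq G u v" .
  define r where "r = (u \<bullet> (A *v v))\<^sup>2 / qf A u"
  have r0: "r \<ge> 0" using r r_def by simp
  have pA': "projq A u v = qf A v - r" using pA r_def by simp
  have e': "qf (BFGS A G u) v = projq G u v + r" using e r_def by simp
  have m1: "(\<eta> - 1) * r \<ge> 0" using r0 b by simp
  have m2: "(1 - \<beta>) * r \<ge> 0" using r0 b by simp
  show "qf (BFGS A G u) v \<le> \<eta> * qf A v"
    using 1 m1 unfolding e' pA' by (simp add: algebra_simps)
  show "\<beta> * qf A v \<le> qf (BFGS A G u) v"
    using 2 m2 unfolding e' pA' by (simp add: algebra_simps)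
qed




lemma inv_qf_mul:
  assumes "pdm A" shows "qf (matrix_inv A) (A *v z) = qf A z"
proof -
  have inv: "invertible A" using pdm_invertible assms by blast
  show ?thesis unfolding qf_def using inv_vec[OF inv] by (simp add: inner_commute)
qed

lemma theta_core:
  assumes A: "pdm A" and G: "pdm G" and c: "0 \<le> c" "c < 1"
    and up: "\<And>h. qf A h \<le> (1 + c) * qf G h" and lo: "\<And>h. (1 - c) * qf G h \<le> qf A h"
  shows "qf (matrix_inv A) ((G - A) *v u) \<le> c\<^sup>2 * qf (matrix_inv A) (G *v u)"
proof -
  have iA: "invertible A" and iG: "invertible G" using pdm_invertible A G by blast+
  define Ai where "Ai = matrix_inv A"
  define Gi where "Gi = matrix_inv G"
  have sAi: "symv Ai" and sGi: "symv Gi" and sA: "symv A" and sG: "symv G"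
    using pdm_inv_symv A G Ai_def Gi_def pdm_def by blast+
  have pAi: "pdm Ai" using pdm_inv_pdm[OF A] Ai_def by simp
  have pGi: "pdm Gi" using pdm_inv_pdm[OF G] Gi_def by simp
  define y where "y = G *v u"
  define z where "z = Gi *v y"
  have zu: "z = u" unfolding z_def y_def Gi_def using inv_vec[OF iG] by simp
  have p: "(G - A) *v u = y - A *v z"
    by (simp add: y_def zu matrix_vector_mult_diff_rdistrib)
  have AiAz: "Ai *v (A *v z) = z" unfolding Ai_def using inv_vec[OF iA] by simp
  have N: "qf Ai (y - A *v z) = qf Ai y - 2 * (y \<bullet> z) + qf A z"
    using qf_expand_diff[OF sAi, of y "A *v z"] AiAz inv_qf_mul[OF A] Ai_def by simp
  have i1: "qf Ai h \<le> (1 / (1 - c)) * qf Gi h" for h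
    unfolding Ai_def Gi_def
  proof (rule inv_antitone[OF G A])
    show "0 < 1 / (1 - c)" using c by simp
    fix h show "qf G h \<le> 1 / (1 - c) * qf A h" using lo[of h] c by (simp add: field_simps)
  qed
  have i2: "qf Gi h \<le> (1 + c) * qf Ai h" for h
    unfolding Ai_def Gi_def
    by (rule inv_antitone[OF A G]) (use c up in auto)
  define P where "P = Gi - (1 - c) *\<^sub>R Ai"
  have sP: "symv P" unfolding P_def by (intro symv_diff symv_scale sGi sAi)
  have qP: "qf P h = qf Gi h - (1 - c) * qf Ai h" for h
    unfolding P_def by (simp add: qf_diff qf_scale)
  have Ppsd: "qf P h \<ge> 0" for h
    using i1[of h] c unfolding qP by (simp add: field_simps)
  have Pup: "qf P h \<le> 2 * c * qf Ai h" for h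
    using i2[of h] unfolding qP by (simp add: algebra_simps)
  define k where "k = P *v y"
  have k: "k = z - (1 - c) *\<^sub>R (Ai *v y)"
    unfolding k_def P_def z_def by (simp add: matrix_vector_mult_diff_rdistrib scaleR_matrix_vector_assoc[symmetric])
  define Q where "Q = qf A k"
  have Q0: "Q \<ge> 0" unfolding Q_def using pdm_psd[OF A] .
  have "Q = (A *v k) \<bullet> (P *v y)" unfolding Q_def qf_def k_def by (simp add: inner_commute)
  then have "Q\<^sup>2 \<le> qf P (A *v k) * qf P y"
    using cs_form[OF sP Ppsd, of "A *v k" y] by simp
  also have "\<dots> \<le> (2 * c * qf Ai (A *v k)) * qf P y"
    by (rule mult_right_mono[OF Pup Ppsd])
  also have "qf Ai (A *v k) = Q" unfolding Q_def Ai_def by (rule inv_qf_mul[OF A])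
  finally have "Q * Q \<le> Q * (2 * c * qf P y)" by (simp add: power2_eq_square algebra_simps)
  then have Qb: "Q \<le> 2 * c * qf P y"
    using Q0 Ppsd[of y] c by (cases "Q = 0") (auto intro: mult_nonneg_nonneg)
  have AAi: "A *v (Ai *v y) = y" unfolding Ai_def using inv_vec[OF iA] by simp
  have Qe: "Q = qf A z - 2 * (1 - c) * (y \<bullet> z) + (1 - c)\<^sup>2 * qf Ai y"
  proof -
    have "Q = qf A z + 2 * (- (1 - c)) * (z \<bullet> (A *v (Ai *v y))) + (- (1 - c))\<^sup>2 * qf A (Ai *v y)"
      unfolding Q_def k using qf_expand[OF sA, of z "-(1-c)" "Ai *v y"]
      by (simp add: algebra_simps)
    also have "qf A (Ai *v y) = qf Ai y"
      using pdm_inv_qf[OF A] Ai_def by simp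
    finally show ?thesis using AAi by (simp add: inner_commute power2_eq_square algebra_simps)
  qed
  have qPy: "qf P y = y \<bullet> z - (1 - c) * qf Ai y"
    unfolding qP z_def by (simp add: qf_def)
  have "qf Ai (y - A *v z) \<le> c\<^sup>2 * qf Ai y"
    using Qb unfolding N Qe qPy by (simp add: algebra_simps power2_eq_square)
  then show ?thesis using p y_def Ai_def by simp
qed

lemma theta_le:
  assumes A: "pdm A" and G: "pdm G" and c: "0 \<le> c" "c < 1"
    and up: "\<And>h. qf A h \<le> (1 + c) * qf G h" and lo: "\<And>h. (1 - c) * qf G h \<le> qf A h"
  shows "theta A G u \<le> c"
proof -
  have sG: "symv G" and sA: "symv A" using A G pdm_def by blast+
  have sGA: "symv (G - A)" using symv_diff[OF sG sA] .
  have e1: "u \<bullet> (((G - A) ** matrix_inv A ** (G - A)) *v u) = qf (matrix_inv A) ((G - A) *v u)"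
  proof -
    have "u \<bullet> (((G - A) ** matrix_inv A ** (G - A)) *v u)
        = u \<bullet> ((G - A) *v (matrix_inv A *v ((G - A) *v u)))"
      by (simp add: matrix_vector_mul_assoc matrix_mul_assoc)
    also have "\<dots> = (matrix_inv A *v ((G - A) *v u)) \<bullet> ((G - A) *v u)"
      using sGA unfolding symv_def by metis
    finally show ?thesis by (simp add: qf_def inner_commute)
  qed
  have e2: "u \<bullet> ((G ** matrix_inv A ** G) *v u) = qf (matrix_inv A) (G *v u)"
  proof -
    have "u \<bullet> ((G ** matrix_inv A ** G) *v u) = u \<bullet> (G *v (matrix_inv A *v (G *v u)))"
      by (simp add: matrix_vector_mul_assoc matrix_mul_assoc)
    also have "\<dots> = (matrix_inv A *v (G *v u)) \<bullet> (G *v u)"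
      using sG unfolding symv_def by metis
    finally show ?thesis by (simp add: qf_def inner_commute)
  qed
  define N where "N = qf (matrix_inv A) ((G - A) *v u)"
  define D where "D = qf (matrix_inv A) (G *v u)"
  have ND: "N \<le> c\<^sup>2 * D" unfolding N_def D_def by (rule theta_core[OF assms])
  have D0: "D \<ge> 0" unfolding D_def by (rule pdm_psd[OF pdm_inv_pdm[OF A]])
  have "N / D \<le> c\<^sup>2"
  proof (cases "D = 0")
    case True then show ?thesis by simp
  next
    case False then have "D > 0" using D0 by simp
    then show ?thesis using ND by (simp add: field_simps)
  qed
  then have "sqrt (N / D) \<le> sqrt (c\<^sup>2)" by (rule real_sqrt_le_mono)
  then show ?thesis unfolding theta_def e1 e2 N_def D_def using c by simp
qed




lemma dir_deriv:
  fixes f :: "real^'n \<Rightarrow> real"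
  assumes grad: "\<And>y. (f has_derivative (\<lambda>h. g y \<bullet> h)) (at y)"
  shows "((\<lambda>\<sigma>. f (a + \<sigma> *\<^sub>R h)) has_real_derivative (g (a + \<sigma> *\<^sub>R h) \<bullet> h)) (at \<sigma>)"
proof -
  have d1: "((\<lambda>\<sigma>::real. a + \<sigma> *\<^sub>R h) has_derivative (\<lambda>d. d *\<^sub>R h)) (at \<sigma>)"
    by (auto intro!: derivative_eq_intros)
  have "((\<lambda>\<sigma>. f (a + \<sigma> *\<^sub>R h)) has_derivative (\<lambda>d. g (a + \<sigma> *\<^sub>R h) \<bullet> (d *\<^sub>R h))) (at \<sigma>)"
    using has_derivative_compose[OF d1 grad] by simp
  then show ?thesis unfolding has_field_derivative_def
    by (rule has_derivative_eq_rhs) (auto simp: mult.commute)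
qed

lemma hess_key:
  fixes f :: "real^'n \<Rightarrow> real"
  assumes grad: "\<And>y. (f has_derivative (\<lambda>h. g y \<bullet> h)) (at y)"
    and hess: "(g has_derivative (\<lambda>h. Hy *v h)) (at y)"
    and e: "e > 0"
  shows "\<exists>d>0. \<forall>t. 0 < t \<and> t < d \<longrightarrow>
     \<bar>(f (y + t *\<^sub>R h + t *\<^sub>R k) - f (y + t *\<^sub>R h) - f (y + t *\<^sub>R k) + f y) - t\<^sup>2 * (h \<bullet> (Hy *v k))\<bar>
       \<le> e * t\<^sup>2 * (norm h * (2 * norm h + norm k))"
proof -
  obtain d0 where d0: "d0 > 0" and R: "\<And>w. norm (w - y) < d0 \<Longrightarrow>
      norm (g w - g y - Hy *v (w - y)) \<le> e * norm (w - y)"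
    using hess e unfolding has_derivative_at_alt by blast
  define d where "d = d0 / (norm h + norm k + 1)"
  have dpos: "d > 0" unfolding d_def using d0 by (simp add: add_nonneg_pos)
  show ?thesis
  proof (intro exI[of _ d] conjI allI impI dpos)
    fix t :: real assume t: "0 < t \<and> t < d"
    define \<phi> where "\<phi> \<sigma> = f ((y + t *\<^sub>R k) + \<sigma> *\<^sub>R h) - f (y + \<sigma> *\<^sub>R h)" for \<sigma>
    define \<phi>' where "\<phi>' \<sigma> = g ((y + t *\<^sub>R k) + \<sigma> *\<^sub>R h) \<bullet> h - g (y + \<sigma> *\<^sub>R h) \<bullet> h" for \<sigma>
    have der: "(\<phi> has_real_derivative \<phi>' \<sigma>) (at \<sigma>)" for \<sigma>
      unfolding \<phi>_def \<phi>'_def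
      by (intro DERIV_diff dir_deriv[OF grad])
    obtain \<xi> where \<xi>: "0 < \<xi>" "\<xi> < t" and mv: "\<phi> t - \<phi> 0 = (t - 0) * \<phi>' \<xi>"
      using MVT2[of 0 t \<phi> \<phi>'] der t by blast
    have Deq: "f (y + t *\<^sub>R h + t *\<^sub>R k) - f (y + t *\<^sub>R h) - f (y + t *\<^sub>R k) + f y = \<phi> t - \<phi> 0"
      unfolding \<phi>_def by (simp add: algebra_simps)
    define w1 where "w1 = (y + t *\<^sub>R k) + \<xi> *\<^sub>R h"
    define w2 where "w2 = y + \<xi> *\<^sub>R h"
    have N: "norm h + norm k + 1 > 0" by (simp add: add_nonneg_pos)
    have tdd: "t * (norm h + norm k + 1) < d0"
      using t pos_less_divide_eq[OF N] unfolding d_def by blast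
    have n1: "norm (w1 - y) \<le> t * norm k + t * norm h"
    proof -
      have "norm (w1 - y) = norm (t *\<^sub>R k + \<xi> *\<^sub>R h)" unfolding w1_def by (simp add: algebra_simps)
      also have "\<dots> \<le> t * norm k + \<xi> * norm h"
        using norm_triangle_ineq[of "t *\<^sub>R k" "\<xi> *\<^sub>R h"] t \<xi> by simp
      also have "\<dots> \<le> t * norm k + t * norm h" using \<xi> by (simp add: mult_right_mono)
      finally show ?thesis .
    qed
    have n2: "norm (w2 - y) \<le> t * norm h"
      unfolding w2_def using \<xi> by (simp add: mult_right_mono)
    have l1: "norm (w1 - y) < d0" using n1 tdd t by (smt (verit) mult_nonneg_nonneg norm_ge_zero distrib_left)
    have l2: "norm (w2 - y) < d0" using n2 tdd t by (smt (verit) mult_nonneg_nonneg norm_ge_zero distrib_left)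
    define R1 where "R1 = g w1 - g y - Hy *v (w1 - y)"
    define R2 where "R2 = g w2 - g y - Hy *v (w2 - y)"
    have R1b: "norm R1 \<le> e * (t * norm k + t * norm h)"
      using R[OF l1] n1 e R1_def by (smt (verit) mult_left_mono)
    have R2b: "norm R2 \<le> e * (t * norm h)"
      using R[OF l2] n2 e R2_def by (smt (verit) mult_left_mono)
    have "w1 - y - (w2 - y) = t *\<^sub>R k" unfolding w1_def w2_def by (simp add: algebra_simps)
    then have e1: "Hy *v (w1 - y) - Hy *v (w2 - y) = t *\<^sub>R (Hy *v k)"
      by (metis matrix_vector_mult_diff_distrib matrix_vector_mult_scaleR)
    have gen: "\<And>a b c p q :: real^'n. a - b = (a - c - p) - (b - c - q) + (p - q)"
      by (simp add: algebra_simps)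
    have gw: "g w1 - g w2 = R1 - R2 + t *\<^sub>R (Hy *v k)"
      unfolding R1_def R2_def e1[symmetric] by (rule gen)
    have ph: "\<phi>' \<xi> = (R1 - R2) \<bullet> h + t * (h \<bullet> (Hy *v k))"
      unfolding \<phi>'_def w1_def[symmetric] w2_def[symmetric] inner_diff_left[symmetric] gw
      by (simp add: inner_add_left inner_add_right inner_commute)
    have "\<bar>(R1 - R2) \<bullet> h\<bar> \<le> norm (R1 - R2) * norm h" by (rule Cauchy_Schwarz_ineq2)
    also have "\<dots> \<le> (norm R1 + norm R2) * norm h"
      by (intro mult_right_mono norm_triangle_ineq4) simp
    also have "\<dots> \<le> (e * (t * norm k + t * norm h) + e * (t * norm h)) * norm h"
      by (intro mult_right_mono add_mono R1b R2b) simp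
    finally have b: "\<bar>(R1 - R2) \<bullet> h\<bar> \<le> e * t * (norm h * (2 * norm h + norm k))"
      by (simp add: algebra_simps)
    have "\<bar>(\<phi> t - \<phi> 0) - t\<^sup>2 * (h \<bullet> (Hy *v k))\<bar> = t * \<bar>(R1 - R2) \<bullet> h\<bar>"
    proof -
      have "(\<phi> t - \<phi> 0) - t\<^sup>2 * (h \<bullet> (Hy *v k)) = t * ((R1 - R2) \<bullet> h)"
        unfolding mv ph by (simp add: algebra_simps power2_eq_square)
      then show ?thesis using t by (simp add: abs_mult)
    qed
    also have "\<dots> \<le> t * (e * t * (norm h * (2 * norm h + norm k)))"
      using b t by (simp add: mult_left_mono)
    finally show "\<bar>(f (y + t *\<^sub>R h + t *\<^sub>R k) - f (y + t *\<^sub>R h) - f (y + t *\<^sub>R k) + f y) - t\<^sup>2 * (h \<bullet> (Hy *v k))\<bar>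
       \<le> e * t\<^sup>2 * (norm h * (2 * norm h + norm k))"
      unfolding Deq by (simp add: power2_eq_square algebra_simps)
  qed
qed

lemma hess_sym:
  fixes f :: "real^'n \<Rightarrow> real"
  assumes grad: "\<And>y. (f has_derivative (\<lambda>h. g y \<bullet> h)) (at y)"
    and hess: "(g has_derivative (\<lambda>h. Hy *v h)) (at y)"
  shows "symv Hy"
  unfolding symv_def
proof (intro allI)
  fix h k :: "real^'n"
  define a where "a = h \<bullet> (Hy *v k)"
  define b where "b = k \<bullet> (Hy *v h)"
  define C where "C = norm h * (2 * norm h + norm k) + norm k * (2 * norm k + norm h) + 1"
  have C: "C > 0" unfolding C_def by (simp add: add_nonneg_pos)
  show "h \<bullet> (Hy *v k) = k \<bullet> (Hy *v h)"
  proof (rule ccontr)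
    assume "h \<bullet> (Hy *v k) \<noteq> k \<bullet> (Hy *v h)"
    then have pos: "\<bar>a - b\<bar> > 0" unfolding a_def b_def by simp
    define e where "e = \<bar>a - b\<bar> / (2 * C)"
    have e: "e > 0" unfolding e_def using pos C by simp
    obtain d1 where d1: "d1 > 0" and D1: "\<And>t. 0 < t \<and> t < d1 \<Longrightarrow>
     \<bar>(f (y + t *\<^sub>R h + t *\<^sub>R k) - f (y + t *\<^sub>R h) - f (y + t *\<^sub>R k) + f y) - t\<^sup>2 * a\<bar>
       \<le> e * t\<^sup>2 * (norm h * (2 * norm h + norm k))"
      using hess_key[OF grad hess e, of h k] a_def by blast
    obtain d2 where d2: "d2 > 0" and D2: "\<And>t. 0 < t \<and> t < d2 \<Longrightarrow>
     \<bar>(f (y + t *\<^sub>R k + t *\<^sub>R h) - f (y + t *\<^sub>R k) - f (y + t *\<^sub>R h) + f y) - t\<^sup>2 * b\<bar>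
       \<le> e * t\<^sup>2 * (norm k * (2 * norm k + norm h))"
      using hess_key[OF grad hess e, of k h] b_def by blast
    define t where "t = min d1 d2 / 2"
    have t: "0 < t" "t < d1" "t < d2" unfolding t_def using d1 d2 by auto
    define Dl where "Dl = f (y + t *\<^sub>R h + t *\<^sub>R k) - f (y + t *\<^sub>R h) - f (y + t *\<^sub>R k) + f y"
    have Dr: "f (y + t *\<^sub>R k + t *\<^sub>R h) - f (y + t *\<^sub>R k) - f (y + t *\<^sub>R h) + f y = Dl"
      unfolding Dl_def by (simp add: algebra_simps)
    have i1: "\<bar>Dl - t\<^sup>2 * a\<bar> \<le> e * t\<^sup>2 * (norm h * (2 * norm h + norm k))"
      using D1 t unfolding Dl_def by blast
    have i2: "\<bar>Dl - t\<^sup>2 * b\<bar> \<le> e * t\<^sup>2 * (norm k * (2 * norm k + norm h))"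
      using D2[of t] t Dr by simp
    have "t\<^sup>2 * \<bar>a - b\<bar> = \<bar>(Dl - t\<^sup>2 * b) - (Dl - t\<^sup>2 * a)\<bar>"
    proof -
      have "\<bar>(Dl - t\<^sup>2 * b) - (Dl - t\<^sup>2 * a)\<bar> = \<bar>t\<^sup>2 * (a - b)\<bar>" by (simp add: algebra_simps)
      then show ?thesis by (simp add: abs_mult)
    qed
    also have "\<dots> \<le> \<bar>Dl - t\<^sup>2 * a\<bar> + \<bar>Dl - t\<^sup>2 * b\<bar>"
      using abs_triangle_ineq4[of "Dl - t\<^sup>2 * b" "Dl - t\<^sup>2 * a"] by simp
    also have "\<dots> \<le> e * t\<^sup>2 * (C - 1)"
      using i1 i2 unfolding C_def by (simp add: algebra_simps)
    also have "\<dots> < e * t\<^sup>2 * C" using e t by simp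
    also have "\<dots> = t\<^sup>2 * \<bar>a - b\<bar> / 2" unfolding e_def using C by (simp add: field_simps)
    finally have "t\<^sup>2 * \<bar>a - b\<bar> < t\<^sup>2 * \<bar>a - b\<bar> / 2" .
    moreover have "t\<^sup>2 * \<bar>a - b\<bar> > 0" using pos t by simp
    ultimately show False by linarith
  qed
qed




lemma hess_upper_norm:
  fixes g :: "real^'n \<Rightarrow> real^'n"
  assumes hess: "(g has_derivative (\<lambda>h. Hy *v h)) (at y)" and lip: "L-lipschitz_on UNIV g"
  shows "norm (Hy *v h) \<le> L * norm h"
proof (cases "h = 0")
  case True then show ?thesis by simp
next
  case False
  then have hp: "norm h > 0" by simp
  show ?thesis
  proof (rule field_le_epsilon)
    fix e :: real assume e: "e > 0"
    obtain d0 where d0: "d0 > 0" and R: "\<And>w. norm (w - y) < d0 \<Longrightarrow>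
        norm (g w - g y - Hy *v (w - y)) \<le> (e / norm h) * norm (w - y)"
      using hess e hp unfolding has_derivative_at_alt by (meson divide_pos_pos)
    define s where "s = d0 / (2 * (norm h + 1))"
    have s: "s > 0" unfolding s_def using d0 by (simp add: add_nonneg_pos)
    have "s * norm h < d0"
    proof -
      have "s * norm h \<le> s * (norm h + 1)" using s by simp
      also have "\<dots> = d0 / 2" proof -
        have "norm h + 1 > 0" by (simp add: add_nonneg_pos)
        then show ?thesis unfolding s_def by (simp add: field_simps)
      qed
      finally show ?thesis using d0 by simp
    qed
    then have "norm ((y + s *\<^sub>R h) - y) < d0" using s by simp
    from R[OF this] have r: "norm (g (y + s *\<^sub>R h) - g y - s *\<^sub>R (Hy *v h)) \<le> e * s"
      using s hp by (simp add: matrix_vector_mult_scaleR)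
    have lp: "norm (g (y + s *\<^sub>R h) - g y) \<le> L * (s * norm h)"
      using lipschitz_onD[OF lip, of "y + s *\<^sub>R h" y] s by (simp add: dist_norm)
    have "s * norm (Hy *v h) = norm (s *\<^sub>R (Hy *v h))" using s by simp
    also have "\<dots> \<le> norm (g (y + s *\<^sub>R h) - g y) + norm (g (y + s *\<^sub>R h) - g y - s *\<^sub>R (Hy *v h))"
    proof -
      have "s *\<^sub>R (Hy *v h) = (g (y + s *\<^sub>R h) - g y) - (g (y + s *\<^sub>R h) - g y - s *\<^sub>R (Hy *v h))"
        by simp
      then show ?thesis by (metis norm_triangle_ineq4)
    qed
    also have "\<dots> \<le> L * (s * norm h) + e * s" using lp r by simp
    finally have "s * norm (Hy *v h) \<le> s * (L * norm h + e)" by (simp add: algebra_simps)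
    then show "norm (Hy *v h) \<le> L * norm h + e" using s by simp
  qed
qed

lemma hess_upper:
  fixes g :: "real^'n \<Rightarrow> real^'n"
  assumes hess: "(g has_derivative (\<lambda>h. Hy *v h)) (at y)" and lip: "L-lipschitz_on UNIV g"
  shows "qf Hy h \<le> L * (norm h)\<^sup>2"
proof -
  have "qf Hy h \<le> norm h * norm (Hy *v h)" unfolding qf_def by (rule norm_cauchy_schwarz)
  also have "\<dots> \<le> norm h * (L * norm h)" by (rule mult_left_mono[OF hess_upper_norm[OF assms]]) simp
  finally show ?thesis by (simp add: power2_eq_square algebra_simps)
qed

lemma sconv_mid:
  assumes "strongly_convex mu f"
  shows "mu * s\<^sup>2 * (norm h)\<^sup>2 \<le> f (y + s *\<^sub>R h) + f (y - s *\<^sub>R h) - 2 * f y"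
proof -
  have "f ((1/2) *\<^sub>R (y + s *\<^sub>R h) + (1 - 1/2) *\<^sub>R (y - s *\<^sub>R h))
     \<le> (1/2) * f (y + s *\<^sub>R h) + (1 - 1/2) * f (y - s *\<^sub>R h)
       - mu / 2 * (1/2) * (1 - 1/2) * (norm ((y + s *\<^sub>R h) - (y - s *\<^sub>R h)))\<^sup>2"
  proof -
    have all: "\<forall>t. 0 \<le> t \<and> t \<le> 1 \<longrightarrow> f (t *\<^sub>R (y + s *\<^sub>R h) + (1 - t) *\<^sub>R (y - s *\<^sub>R h))
     \<le> t * f (y + s *\<^sub>R h) + (1 - t) * f (y - s *\<^sub>R h)
       - mu / 2 * t * (1 - t) * (norm ((y + s *\<^sub>R h) - (y - s *\<^sub>R h)))\<^sup>2"
      using assms unfolding strongly_convex_def by blast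
    show ?thesis using all[rule_format, of "1/2"] by simp
  qed
  moreover have "(1/2) *\<^sub>R (y + s *\<^sub>R h) + (1 - 1/2) *\<^sub>R (y - s *\<^sub>R h) = y"
  proof -
    have "(1/2) *\<^sub>R (y + s *\<^sub>R h) + (1 - 1/2) *\<^sub>R (y - s *\<^sub>R h) = (1/2) *\<^sub>R y + (1/2) *\<^sub>R y"
      by (simp add: algebra_simps)
    also have "\<dots> = y" by (metis scaleR_add_left field_sum_of_halves scaleR_one)
    finally show ?thesis .
  qed
  moreover have "norm ((y + s *\<^sub>R h) - (y - s *\<^sub>R h)) = 2 * \<bar>s\<bar> * norm h"
  proof -
    have "(y + s *\<^sub>R h) - (y - s *\<^sub>R h) = (2 * s) *\<^sub>R h"
      by (simp add: algebra_simps) (metis scaleR_add_left mult_2_right)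
    then show ?thesis by (simp add: abs_mult)
  qed
  ultimately show ?thesis by (simp add: power2_eq_square algebra_simps)
qed

lemma hess_lower_aux:
  fixes f :: "real^'n \<Rightarrow> real"
  assumes grad: "\<And>y. (f has_derivative (\<lambda>h. g y \<bullet> h)) (at y)"
    and hess: "(g has_derivative (\<lambda>h. Hy *v h)) (at y)"
    and sc: "strongly_convex mu f" and e: "e > 0"
  shows "mu * (norm h)\<^sup>2 \<le> qf Hy h + e * (norm h)\<^sup>2"
proof -
  define q where "q = qf Hy h"
  obtain d0 where d0: "d0 > 0" and R: "\<And>w. norm (w - y) < d0 \<Longrightarrow>
      norm (g w - g y - Hy *v (w - y)) \<le> e * norm (w - y)"
    using hess e unfolding has_derivative_at_alt by blast
  define s where "s = d0 / (2 * (norm h + 1))"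
  have s: "s > 0" unfolding s_def using d0 by (simp add: add_nonneg_pos)
  have sd: "\<sigma> * norm h < d0" if "0 \<le> \<sigma>" "\<sigma> \<le> s" for \<sigma>
  proof -
    have "\<sigma> * norm h \<le> s * (norm h + 1)" using that s
      by (meson le_add_same_cancel1 mult_mono norm_ge_zero order_trans zero_le_one)
    also have "\<dots> = d0 / 2" proof -
      have "norm h + 1 > 0" by (simp add: add_nonneg_pos)
      then show ?thesis unfolding s_def by (simp add: field_simps)
    qed
    finally show ?thesis using d0 by simp
  qed
  define \<psi> where "\<psi> \<sigma> = f (y + \<sigma> *\<^sub>R h) + f (y + \<sigma> *\<^sub>R (- h))" for \<sigma>
  define \<psi>' where "\<psi>' \<sigma> = g (y + \<sigma> *\<^sub>R h) \<bullet> h + g (y + \<sigma> *\<^sub>R (- h)) \<bullet> (- h)" for \<sigma>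
  define ch where "ch \<sigma> = \<psi> \<sigma> - \<sigma>\<^sup>2 * (q + e * (norm h)\<^sup>2)" for \<sigma>
  define ch' where "ch' \<sigma> = \<psi>' \<sigma> - 2 * \<sigma> * (q + e * (norm h)\<^sup>2)" for \<sigma>
  have der: "(ch has_real_derivative ch' \<sigma>) (at \<sigma>)" for \<sigma>
  proof -
    have d1: "((\<lambda>\<sigma>. f (y + \<sigma> *\<^sub>R h)) has_real_derivative g (y + \<sigma> *\<^sub>R h) \<bullet> h) (at \<sigma>)"
      by (rule dir_deriv[OF grad])
    have d2: "((\<lambda>\<sigma>. f (y + \<sigma> *\<^sub>R (- h))) has_real_derivative g (y + \<sigma> *\<^sub>R (- h)) \<bullet> (- h)) (at \<sigma>)"
      by (rule dir_deriv[OF grad])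
    have d3: "((\<lambda>\<sigma>::real. \<sigma>\<^sup>2 * (q + e * (norm h)\<^sup>2)) has_real_derivative 2 * \<sigma> * (q + e * (norm h)\<^sup>2)) (at \<sigma>)"
      by (auto intro!: derivative_eq_intros)
    show ?thesis unfolding ch_def ch'_def \<psi>_def \<psi>'_def
      by (rule DERIV_diff[OF DERIV_add[OF d1 d2] d3])
  qed
  have chineg: "ch' \<sigma> \<le> 0" if "0 \<le> \<sigma>" "\<sigma> \<le> s" for \<sigma>
  proof -
    define w1 where "w1 = y + \<sigma> *\<^sub>R h"
    define w2 where "w2 = y - \<sigma> *\<^sub>R h"
    have n: "norm (w1 - y) = \<sigma> * norm h" "norm (w2 - y) = \<sigma> * norm h"
      unfolding w1_def w2_def using that by simp_all
    define R1 where "R1 = g w1 - g y - Hy *v (w1 - y)"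
    define R2 where "R2 = g w2 - g y - Hy *v (w2 - y)"
    have R1b: "norm R1 \<le> e * (\<sigma> * norm h)" using R[of w1] n sd[OF that] R1_def by simp
    have R2b: "norm R2 \<le> e * (\<sigma> * norm h)" using R[of w2] n sd[OF that] R2_def by simp
    have e1: "Hy *v (w1 - y) - Hy *v (w2 - y) = (\<sigma> + \<sigma>) *\<^sub>R (Hy *v h)"
    proof -
      have "w1 - y - (w2 - y) = (\<sigma> + \<sigma>) *\<^sub>R h" unfolding w1_def w2_def by (simp add: vec_eq_iff algebra_simps)
      then show ?thesis by (metis matrix_vector_mult_diff_distrib matrix_vector_mult_scaleR)
    qed
    have gen: "\<And>a b c p q :: real^'n. a - b = (a - c - p) - (b - c - q) + (p - q)"
      by (simp add: algebra_simps)
    have gw: "g w1 - g w2 = R1 - R2 + (\<sigma> + \<sigma>) *\<^sub>R (Hy *v h)"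
      unfolding R1_def R2_def e1[symmetric] by (rule gen)
    have "\<psi>' \<sigma> = (g w1 - g w2) \<bullet> h" unfolding \<psi>'_def w1_def w2_def by (simp add: inner_diff_left)
    also have "\<dots> = (R1 - R2) \<bullet> h + 2 * \<sigma> * q" unfolding gw q_def qf_def
      by (simp add: inner_add_left inner_commute algebra_simps)
    finally have pe: "\<psi>' \<sigma> = (R1 - R2) \<bullet> h + 2 * \<sigma> * q" .
    have "(R1 - R2) \<bullet> h \<le> norm (R1 - R2) * norm h" by (metis Cauchy_Schwarz_ineq2 abs_le_D1)
    also have "\<dots> \<le> (norm R1 + norm R2) * norm h"
      by (intro mult_right_mono norm_triangle_ineq4) simp
    also have "\<dots> \<le> (e * (\<sigma> * norm h) + e * (\<sigma> * norm h)) * norm h"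
      by (intro mult_right_mono add_mono R1b R2b) simp
    finally have "(R1 - R2) \<bullet> h \<le> 2 * \<sigma> * (e * (norm h)\<^sup>2)" by (simp add: algebra_simps power2_eq_square)
    then show ?thesis unfolding ch'_def pe by (simp add: algebra_simps)
  qed
  obtain \<xi> where \<xi>: "0 < \<xi>" "\<xi> < s" and mv: "ch s - ch 0 = (s - 0) * ch' \<xi>"
    using MVT2[of 0 s ch ch'] der s by blast
  have "ch s - ch 0 \<le> 0" unfolding mv using chineg[of \<xi>] \<xi> s by (simp add: mult_nonneg_nonpos)
  then have "f (y + s *\<^sub>R h) + f (y - s *\<^sub>R h) - 2 * f y \<le> s\<^sup>2 * (q + e * (norm h)\<^sup>2)"
    unfolding ch_def \<psi>_def by simp
  with sconv_mid[OF sc, of s h y] have "mu * s\<^sup>2 * (norm h)\<^sup>2 \<le> s\<^sup>2 * (q + e * (norm h)\<^sup>2)" by linarith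
  then have "s\<^sup>2 * (mu * (norm h)\<^sup>2) \<le> s\<^sup>2 * (q + e * (norm h)\<^sup>2)" by (simp add: algebra_simps)
  then have "mu * (norm h)\<^sup>2 \<le> q + e * (norm h)\<^sup>2"
    using s by (meson mult_le_cancel_left_pos zero_less_power)
  then show "mu * (norm h)\<^sup>2 \<le> qf Hy h + e * (norm h)\<^sup>2" using q_def by simp
qed

lemma hess_lower:
  fixes f :: "real^'n \<Rightarrow> real"
  assumes grad: "\<And>y. (f has_derivative (\<lambda>h. g y \<bullet> h)) (at y)"
    and hess: "(g has_derivative (\<lambda>h. Hy *v h)) (at y)"
    and sc: "strongly_convex mu f"
  shows "mu * (norm h)\<^sup>2 \<le> qf Hy h"
proof (rule field_le_epsilon)
  fix e :: real assume e: "e > 0"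
  define e' where "e' = e / ((norm h)\<^sup>2 + 1)"
  have e': "e' > 0" unfolding e'_def using e by (simp add: add_nonneg_pos)
  have "e' * (norm h)\<^sup>2 \<le> e"
  proof -
    have "e' * (norm h)\<^sup>2 \<le> e' * ((norm h)\<^sup>2 + 1)" using e' by simp
    also have "\<dots> = e" proof -
      have nz: "(norm h)\<^sup>2 + 1 \<noteq> 0" by (smt (verit) zero_le_power2)
      show ?thesis unfolding e'_def using nz by simp
    qed
    finally show ?thesis .
  qed
  then show "mu * (norm h)\<^sup>2 \<le> qf Hy h + e"
    using hess_lower_aux[OF grad hess sc e', of h] by linarith
qed




lemma entry_inner: "A $ i $ j = axis i 1 \<bullet> (A *v axis j 1)"
  by (simp add: matrix_vector_mult_basis inner_axis' column_def)

lemma polar: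
  assumes "symv A"
  shows "a \<bullet> (A *v b) = (qf A (a + b) - qf A (a - b)) / 4"
  using qf_expand[OF assms, of a 1 b] qf_expand[OF assms, of a "-1" b] by simp

lemma norm_axis_pm: "norm (axis i (1::real) + axis j 1) \<le> 2" "norm (axis i (1::real) - axis j 1) \<le> 2"
  using norm_triangle_ineq[of "axis i (1::real)" "axis j 1"] norm_triangle_ineq4[of "axis i (1::real)" "axis j 1"]
  by (simp_all add: norm_axis_1)

lemma bounded_linear_qf_mat: "bounded_linear (\<lambda>A::real^'n^'n. x \<bullet> (A *v y))"
proof -
  have "linear (\<lambda>A::real^'n^'n. x \<bullet> (A *v y))"
    by (rule linearI) (simp_all add: matrix_vector_mult_add_rdistrib inner_add_right
        scaleR_matrix_vector_assoc[symmetric])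
  then show ?thesis using linear_conv_bounded_linear by blast
qed

lemma bounded_linear_mv: "bounded_linear (\<lambda>A::real^'n^'n. A *v y)"
proof -
  have "linear (\<lambda>A::real^'n^'n. A *v y)"
    by (rule linearI) (simp_all add: matrix_vector_mult_add_rdistrib scaleR_matrix_vector_assoc[symmetric])
  then show ?thesis using linear_conv_bounded_linear by blast
qed

locale sett =
  fixes f :: "real^'n \<Rightarrow> real"
    and g :: "real^'n \<Rightarrow> real^'n"
    and H :: "real^'n \<Rightarrow> real^'n^'n"
    and mu L M :: real
  assumes grad: "\<And>y. (f has_derivative (\<lambda>h. g y \<bullet> h)) (at y)"
    and hess: "\<And>y. (g has_derivative (\<lambda>h. H y *v h)) (at y)"
    and mu_pos: "0 < mu" and mu_le_L: "mu \<le> L" and M_pos: "0 < M"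
    and sconv: "strongly_convex mu f"
    and lip: "L-lipschitz_on UNIV g"
    and ssc: "strongly_self_concordant M H"
begin

lemma Hsym: "symv (H y)"
  by (rule hess_sym[OF grad hess])

lemma Hup: "qf (H y) h \<le> L * (norm h)\<^sup>2"
  by (rule hess_upper[OF hess lip])

lemma Hlo: "mu * (norm h)\<^sup>2 \<le> qf (H y) h"
  by (rule hess_lower[OF grad hess sconv])

lemma Hpsd: "qf (H y) h \<ge> 0"
  using Hlo[of h y] mu_pos by (smt (verit) mult_nonneg_nonneg zero_le_power2)

lemma Hpdm: "pdm (H y)"
  unfolding pdm_def using Hsym Hlo mu_pos
  by (metis mult_pos_pos zero_less_norm_iff order_less_le_trans zero_less_power)

lemma L_pos: "L > 0" using mu_pos mu_le_L by simp

lemma ssc_qf: "qf (H y) h - qf (H x) h \<le> M * local_norm H z (y - x) * qf (H w) h"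
  using ssc unfolding strongly_self_concordant_def loewner_le_qf qf_diff qf_scale by blast

lemma local_norm_le: "local_norm H z v \<le> sqrt L * norm v"
proof -
  have "local_norm H z v = sqrt (qf (H z) v)" unfolding local_norm_def qf_def ..
  also have "\<dots> \<le> sqrt (L * (norm v)\<^sup>2)" using Hup by (rule real_sqrt_le_mono)
  also have "\<dots> = sqrt L * norm v" by (simp add: real_sqrt_mult)
  finally show ?thesis .
qed

lemma qf_diff_bound: "\<bar>qf (H y - H x) v\<bar> \<le> (M * sqrt L * L) * norm (y - x) * (norm v)\<^sup>2"
proof -
  have a: "M * local_norm H x (y - x) * qf (H x) v \<le> (M * sqrt L * L) * norm (y - x) * (norm v)\<^sup>2"
  proof -
    have "M * local_norm H x (y - x) * qf (H x) v \<le> M * (sqrt L * norm (y - x)) * (L * (norm v)\<^sup>2)"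
      using M_pos local_norm_le Hup Hpsd Hpsd[unfolded qf_def] L_pos
      by (intro mult_mono mult_left_mono) (auto simp: local_norm_def)
    then show ?thesis by (simp add: algebra_simps)
  qed
  have b: "M * local_norm H x (x - y) * qf (H x) v \<le> (M * sqrt L * L) * norm (y - x) * (norm v)\<^sup>2"
  proof -
    have "M * local_norm H x (x - y) * qf (H x) v \<le> M * (sqrt L * norm (x - y)) * (L * (norm v)\<^sup>2)"
      using M_pos local_norm_le Hup Hpsd Hpsd[unfolded qf_def] L_pos
      by (intro mult_mono mult_left_mono) (auto simp: local_norm_def)
    then show ?thesis by (simp add: algebra_simps norm_minus_commute)
  qed
  show ?thesis unfolding qf_diff using ssc_qf[of y v x x x] ssc_qf[of x v y x x] a b by linarith
qed

lemma H_lipschitz: "(CARD('n) * CARD('n) * (2 * (M * sqrt L * L)))-lipschitz_on UNIV H"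
proof (rule lipschitz_onI)
  fix y x :: "real^'n"
  define K where "K = M * sqrt L * L"
  have K0: "K \<ge> 0" unfolding K_def using M_pos L_pos by simp
  define D where "D = H y - H x"
  have sD: "symv D" unfolding D_def by (intro symv_diff Hsym)
  have ent: "\<bar>D $ i $ j\<bar> \<le> 2 * K * norm (y - x)" for i j
  proof -
    have "D $ i $ j = (qf D (axis i 1 + axis j 1) - qf D (axis i 1 - axis j 1)) / 4"
      unfolding entry_inner polar[OF sD] ..
    then have "\<bar>D $ i $ j\<bar> \<le> (\<bar>qf D (axis i 1 + axis j 1)\<bar> + \<bar>qf D (axis i 1 - axis j 1)\<bar>) / 4"
      by simp
    also have "\<dots> \<le> (K * norm (y - x) * 4 + K * norm (y - x) * 4) / 4"
    proof -
      have "\<bar>qf D (axis i 1 + axis j 1)\<bar> \<le> K * norm (y - x) * (norm (axis i (1::real) + axis j 1))\<^sup>2"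
        using qf_diff_bound unfolding D_def K_def by blast
      also have "\<dots> \<le> K * norm (y - x) * 4"
        using norm_axis_pm(1)[of i j] K0
        by (intro mult_left_mono) (auto simp: power2_le_iff_abs_le[of 2, simplified] abs_le_iff)
      finally have 1: "\<bar>qf D (axis i 1 + axis j 1)\<bar> \<le> K * norm (y - x) * 4" .
      have "\<bar>qf D (axis i 1 - axis j 1)\<bar> \<le> K * norm (y - x) * (norm (axis i (1::real) - axis j 1))\<^sup>2"
        using qf_diff_bound unfolding D_def K_def by blast
      also have "\<dots> \<le> K * norm (y - x) * 4"
        using norm_axis_pm(2)[of i j] K0
        by (intro mult_left_mono) (auto simp: power2_le_iff_abs_le[of 2, simplified] abs_le_iff)
      finally have 2: "\<bar>qf D (axis i 1 - axis j 1)\<bar> \<le> K * norm (y - x) * 4" .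
      from 1 2 show ?thesis by simp
    qed
    finally show ?thesis by simp
  qed
  have "norm D \<le> (\<Sum>i\<in>UNIV. norm (D $ i))" unfolding norm_vec_def by (rule L2_set_le_sum) simp
  also have "\<dots> \<le> (\<Sum>i\<in>(UNIV::'n set). \<Sum>j\<in>(UNIV::'n set). \<bar>D $ i $ j\<bar>)"
    by (intro sum_mono norm_le_l1_cart)
  also have "\<dots> \<le> (\<Sum>i\<in>(UNIV::'n set). \<Sum>j\<in>(UNIV::'n set). 2 * K * norm (y - x))"
    by (intro sum_mono ent)
  also have "\<dots> = CARD('n) * CARD('n) * (2 * K) * norm (y - x)" by simp
  finally show "dist (H y) (H x) \<le> CARD('n) * CARD('n) * (2 * (M * sqrt L * L)) * dist y x"
    unfolding D_def K_def dist_norm by simp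
next
  show "0 \<le> real (CARD('n) * CARD('n)) * (2 * (M * sqrt L * L))" using M_pos L_pos by simp
qed

lemma H_cont: "continuous_on S H"
  using lipschitz_on_continuous_on[OF H_lipschitz] continuous_on_subset by blast

end



lemma aff_int: "((\<lambda>\<tau>::real. \<alpha> + \<beta> * \<tau>) has_integral (\<alpha> + \<beta> / 2)) {0..1}"
proof -
  have "((\<lambda>\<tau>::real. \<alpha> + \<beta> * \<tau>) has_integral ((\<lambda>\<tau>. \<alpha> * \<tau> + \<beta> * \<tau>\<^sup>2 / 2) 1 - (\<lambda>\<tau>. \<alpha> * \<tau> + \<beta> * \<tau>\<^sup>2 / 2) 0)) {0..1}"
  proof (rule fundamental_theorem_of_calculus)
    fix x :: real assume "x \<in> {0..1}"
    have "((\<lambda>\<tau>. \<alpha> * \<tau> + \<beta> * \<tau>\<^sup>2 / 2) has_real_derivative (\<alpha> + \<beta> * x)) (at x within {0..1})"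
      by (auto intro!: derivative_eq_intros)
    then show "((\<lambda>\<tau>. \<alpha> * \<tau> + \<beta> * \<tau>\<^sup>2 / 2) has_vector_derivative (\<alpha> + \<beta> * x)) (at x within {0..1})"
      using has_real_derivative_iff_has_vector_derivative by blast
  qed simp
  then show ?thesis by simp
qed

lemma tangent_ineq:
  fixes x m :: real
  assumes "x \<ge> 0" "m \<ge> 0"
  shows "1 / (1 + m) - (x - m) / (1 + m)\<^sup>2 \<le> 1 / (1 + x)"
proof -
  have "(1 + x) * ((1 + m) - (x - m)) \<le> (1 + m)\<^sup>2"
  proof -
    have "(1 + m)\<^sup>2 - (1 + x) * ((1 + m) - (x - m)) = (x - m)\<^sup>2" by algebra
    then show ?thesis using zero_le_power2[of "x - m"] by linarith
  qed
  then have "((1 + m) - (x - m)) / (1 + m)\<^sup>2 \<le> 1 / (1 + x)"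
    using assms by (simp add: field_simps)
  moreover have "1 / (1 + m) - (x - m) / (1 + m)\<^sup>2 = ((1 + m) - (x - m)) / (1 + m)\<^sup>2"
  proof -
    have nz: "1 + m \<noteq> 0" using assms by simp
    have "1 / (1 + m) = (1 + m) / (1 + m)\<^sup>2" using nz by (simp add: power2_eq_square)
    then show ?thesis by (metis diff_divide_distrib)
  qed
  ultimately show ?thesis by simp
qed

context sett begin

definition Jm :: "real^'n \<Rightarrow> real^'n \<Rightarrow> real^'n^'n" where
  "Jm a s = integral {0..1} (\<lambda>\<tau>::real. H (a + \<tau> *\<^sub>R s))"

lemma seg_cont: "continuous_on {0..1} (\<lambda>\<tau>::real. H (a + \<tau> *\<^sub>R s))"
  by (rule continuous_on_compose2[OF H_cont[of UNIV]]) (auto intro!: continuous_intros)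

lemma Jint: "(\<lambda>\<tau>::real. H (a + \<tau> *\<^sub>R s)) integrable_on {0..1}"
  by (rule integrable_continuous_interval[OF seg_cont])

lemma J_bil: "x \<bullet> (Jm a s *v y) = integral {0..1} (\<lambda>\<tau>. x \<bullet> (H (a + \<tau> *\<^sub>R s) *v y))"
  using integral_linear[OF Jint[of a s] bounded_linear_qf_mat[of x y]] unfolding Jm_def o_def by simp

lemma bil_int: "(\<lambda>\<tau>::real. x \<bullet> (H (a + \<tau> *\<^sub>R s) *v y)) integrable_on {0..1}"
  using integrable_linear[OF Jint[of a s] bounded_linear_qf_mat[of x y]] unfolding o_def by simp

lemma J_symv: "symv (Jm a s)"
  unfolding symv_def J_bil using Hsym unfolding symv_def by simp

lemma J_ftc: "g (a + s) - g a = Jm a s *v s"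
proof -
  have "((\<lambda>\<tau>. H (a + \<tau> *\<^sub>R s) *v s) has_integral (g (a + 1 *\<^sub>R s) - g (a + 0 *\<^sub>R s))) {0..1}"
  proof (rule fundamental_theorem_of_calculus)
    fix \<tau> :: real assume "\<tau> \<in> {0..1}"
    have d1: "((\<lambda>\<tau>::real. a + \<tau> *\<^sub>R s) has_derivative (\<lambda>d. d *\<^sub>R s)) (at \<tau> within {0..1})"
      by (auto intro!: derivative_eq_intros)
    have "((\<lambda>\<tau>. g (a + \<tau> *\<^sub>R s)) has_derivative (\<lambda>d. H (a + \<tau> *\<^sub>R s) *v (d *\<^sub>R s))) (at \<tau> within {0..1})"
      using has_derivative_compose[OF d1 hess] by simp
    then show "((\<lambda>\<tau>. g (a + \<tau> *\<^sub>R s)) has_vector_derivative H (a + \<tau> *\<^sub>R s) *v s) (at \<tau> within {0..1})"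
      unfolding has_vector_derivative_def by (simp add: matrix_vector_mult_scaleR)
  qed simp
  then have "integral {0..1} (\<lambda>\<tau>. H (a + \<tau> *\<^sub>R s) *v s) = g (a + s) - g a"
    by (simp add: integral_unique)
  moreover have "integral {0..1} (\<lambda>\<tau>. H (a + \<tau> *\<^sub>R s) *v s) = Jm a s *v s"
    using integral_linear[OF Jint[of a s] bounded_linear_mv[of s]] unfolding Jm_def o_def by simp
  ultimately show ?thesis by simp
qed

lemma J_qf: "qf (Jm a s) v = integral {0..1} (\<lambda>\<tau>. qf (H (a + \<tau> *\<^sub>R s)) v)"
  unfolding qf_def by (rule J_bil)

lemma J_upper_aff:
  assumes "\<And>\<tau>. \<tau> \<in> {0..1} \<Longrightarrow> qf (H (a + \<tau> *\<^sub>R s)) v \<le> \<alpha> + \<beta> * \<tau>"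
  shows "qf (Jm a s) v \<le> \<alpha> + \<beta> / 2"
proof -
  have "integral {0..1} (\<lambda>\<tau>. qf (H (a + \<tau> *\<^sub>R s)) v) \<le> integral {0..1} (\<lambda>\<tau>::real. \<alpha> + \<beta> * \<tau>)"
    using bil_int[of v a s v] aff_int assms unfolding qf_def
    by (intro integral_le) (auto simp: has_integral_integrable qf_def)
  then show ?thesis unfolding J_qf using aff_int integral_unique by metis
qed

lemma J_lower_aff:
  assumes "\<And>\<tau>. \<tau> \<in> {0..1} \<Longrightarrow> \<alpha> + \<beta> * \<tau> \<le> qf (H (a + \<tau> *\<^sub>R s)) v"
  shows "\<alpha> + \<beta> / 2 \<le> qf (Jm a s) v"
proof -
  have "integral {0..1} (\<lambda>\<tau>::real. \<alpha> + \<beta> * \<tau>) \<le> integral {0..1} (\<lambda>\<tau>. qf (H (a + \<tau> *\<^sub>R s)) v)"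
    using bil_int[of v a s v] aff_int assms unfolding qf_def
    by (intro integral_le) (auto simp: has_integral_integrable qf_def)
  then show ?thesis unfolding J_qf using aff_int integral_unique by metis
qed

lemma local_norm_scale: "local_norm H z (c *\<^sub>R s) = \<bar>c\<bar> * local_norm H z s"
  unfolding local_norm_def
  by (metis qf_def qf_scale_vec real_sqrt_abs real_sqrt_mult)

lemma local_norm_nonneg: "local_norm H z s \<ge> 0"
  unfolding local_norm_def using Hpsd[unfolded qf_def] by simp

end



lemma lower_from:
  fixes Qx P k m :: real
  assumes "Qx \<le> (1 + k) * P" "Qx \<ge> 0" "k \<ge> 0" "m \<ge> 0"
  shows "(1 / (1 + m) - (k - m) / (1 + m)\<^sup>2) * Qx \<le> P"
proof -
  have c: "1 / (1 + m) - (k - m) / (1 + m)\<^sup>2 \<le> 1 / (1 + k)" by (rule tangent_ineq) (use assms in auto)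
  have "(1 / (1 + m) - (k - m) / (1 + m)\<^sup>2) * Qx \<le> (1 / (1 + k)) * Qx"
    by (rule mult_right_mono[OF c assms(2)])
  also have "\<dots> \<le> P" using assms by (simp add: field_simps)
  finally show ?thesis .
qed

lemma aff_id1: fixes A d Q m \<tau> :: real
  shows "(A - (2 * m * \<tau> - m) / d) * Q = (A + m / d) * Q + (- 2 * m / d * Q) * \<tau>"
  by (cases "d = 0") (simp_all add: field_simps)

lemma aff_id2: fixes A d Q m \<tau> :: real
  shows "(A - (2 * m * (1 - \<tau>) - m) / d) * Q = (A - m / d) * Q + (2 * m / d * Q) * \<tau>"
  by (cases "d = 0") (simp_all add: field_simps)

lemma aff_id3: fixes A d Q m :: real
  shows "(A + m / d) * Q + (- 2 * m / d * Q) / 2 = A * Q" "(A - m / d) * Q + (2 * m / d * Q) / 2 = A * Q"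
  by (cases "d = 0"; simp add: field_simps)+

context sett begin

lemma J_bounds:
  fixes a s v :: "real^'n"
  defines "m \<equiv> M * local_norm H a s / 2"
  shows "qf (Jm a s) v \<le> (1 + m) * qf (H a) v"
    and "qf (H a) v \<le> (1 + m) * qf (Jm a s) v"
    and "qf (H (a + s)) v \<le> (1 + m) * qf (Jm a s) v"
    and "qf (Jm a s) v \<le> (1 + m) * qf (H (a + s)) v"
proof -
  define r where "r = local_norm H a s"
  have r0: "r \<ge> 0" unfolding r_def by (rule local_norm_nonneg)
  have m: "m = M * r / 2" unfolding m_def r_def ..
  have m0: "m \<ge> 0" unfolding m using M_pos r0 by simp
  have m1: "1 + m > 0" using m0 by simp
  define Q where "Q = qf (H a) v"
  define Qb where "Qb = qf (H (a + s)) v"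
  have Q0: "Q \<ge> 0" "Qb \<ge> 0" unfolding Q_def Qb_def by (rule Hpsd)+
  have ln1: "local_norm H a ((a + \<tau> *\<^sub>R s) - a) = \<tau> * r" if "\<tau> \<in> {0..1}" for \<tau>
    using that local_norm_scale[of a \<tau> s] unfolding r_def by simp
  have ln2: "local_norm H a ((a + \<tau> *\<^sub>R s) - (a + s)) = (1 - \<tau>) * r" if "\<tau> \<in> {0..1}" for \<tau>
  proof -
    have "(a + \<tau> *\<^sub>R s) - (a + s) = (\<tau> - 1) *\<^sub>R s" by (simp add: algebra_simps)
    then show ?thesis using that local_norm_scale[of a "\<tau> - 1" s] unfolding r_def by simp
  qed
  have ln3: "local_norm H a (a - (a + \<tau> *\<^sub>R s)) = \<tau> * r" if "\<tau> \<in> {0..1}" for \<tau>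
  proof -
    have "a - (a + \<tau> *\<^sub>R s) = (- \<tau>) *\<^sub>R s" by simp
    then show ?thesis using that local_norm_scale[of a "- \<tau>" s] unfolding r_def by simp
  qed
  have ln4: "local_norm H a ((a + s) - (a + \<tau> *\<^sub>R s)) = (1 - \<tau>) * r" if "\<tau> \<in> {0..1}" for \<tau>
  proof -
    have "(a + s) - (a + \<tau> *\<^sub>R s) = (1 - \<tau>) *\<^sub>R s" by (simp add: algebra_simps)
    then show ?thesis using that local_norm_scale[of a "1 - \<tau>" s] unfolding r_def by simp
  qed
  show "qf (Jm a s) v \<le> (1 + m) * qf (H a) v"
  proof -
    have "qf (Jm a s) v \<le> Q + (2 * m * Q) / 2"
    proof (rule J_upper_aff)
      fix \<tau> :: real assume t: "\<tau> \<in> {0..1}"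
      have "qf (H (a + \<tau> *\<^sub>R s)) v - Q \<le> M * (\<tau> * r) * Q"
        using ssc_qf[of "a + \<tau> *\<^sub>R s" v a a a] ln1[OF t] Q_def by simp
      then show "qf (H (a + \<tau> *\<^sub>R s)) v \<le> Q + 2 * m * Q * \<tau>" unfolding m by (simp add: algebra_simps)
    qed
    then show ?thesis unfolding Q_def by (simp add: algebra_simps)
  qed
  show "qf (Jm a s) v \<le> (1 + m) * qf (H (a + s)) v"
  proof -
    have "qf (Jm a s) v \<le> (Qb + 2 * m * Qb) + (- 2 * m * Qb) / 2"
    proof (rule J_upper_aff)
      fix \<tau> :: real assume t: "\<tau> \<in> {0..1}"
      have "qf (H (a + \<tau> *\<^sub>R s)) v - Qb \<le> M * ((1 - \<tau>) * r) * Qb"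
        using ssc_qf[of "a + \<tau> *\<^sub>R s" v "a + s" a "a + s"] ln2[OF t] Qb_def by simp
      then show "qf (H (a + \<tau> *\<^sub>R s)) v \<le> (Qb + 2 * m * Qb) + (- 2 * m * Qb) * \<tau>"
        unfolding m by (simp add: algebra_simps)
    qed
    then show ?thesis unfolding Qb_def by (simp add: algebra_simps)
  qed
  show "qf (H a) v \<le> (1 + m) * qf (Jm a s) v"
  proof -
    have "(1 / (1 + m) + m / (1 + m)\<^sup>2) * Q + (- 2 * m / (1 + m)\<^sup>2 * Q) / 2 \<le> qf (Jm a s) v"
    proof (rule J_lower_aff)
      fix \<tau> :: real assume t: "\<tau> \<in> {0..1}"
      have "Q - qf (H (a + \<tau> *\<^sub>R s)) v \<le> M * (\<tau> * r) * qf (H (a + \<tau> *\<^sub>R s)) v"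
        using ssc_qf[of a v "a + \<tau> *\<^sub>R s" a "a + \<tau> *\<^sub>R s"] ln3[OF t] Q_def by simp
      then have "Q \<le> (1 + 2 * m * \<tau>) * qf (H (a + \<tau> *\<^sub>R s)) v" unfolding m by (simp add: algebra_simps)
      from lower_from[OF this Q0(1) _ m0] t m0
      have "(1 / (1 + m) - (2 * m * \<tau> - m) / (1 + m)\<^sup>2) * Q \<le> qf (H (a + \<tau> *\<^sub>R s)) v" by simp
      moreover have "(1 / (1 + m) - (2 * m * \<tau> - m) / (1 + m)\<^sup>2) * Q
          = (1 / (1 + m) + m / (1 + m)\<^sup>2) * Q + (- 2 * m / (1 + m)\<^sup>2 * Q) * \<tau>"
        by (rule aff_id1)
      ultimately show "(1 / (1 + m) + m / (1 + m)\<^sup>2) * Q + (- 2 * m / (1 + m)\<^sup>2 * Q) * \<tau> \<le> qf (H (a + \<tau> *\<^sub>R s)) v"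
        by simp
    qed
    moreover have "(1 / (1 + m) + m / (1 + m)\<^sup>2) * Q + (- 2 * m / (1 + m)\<^sup>2 * Q) / 2 = Q / (1 + m)"
      unfolding aff_id3 by simp
    ultimately have "Q / (1 + m) \<le> qf (Jm a s) v" by simp
    then show ?thesis unfolding Q_def using m1 by (simp add: field_simps)
  qed
  show "qf (H (a + s)) v \<le> (1 + m) * qf (Jm a s) v"
  proof -
    have "(1 / (1 + m) - m / (1 + m)\<^sup>2) * Qb + (2 * m / (1 + m)\<^sup>2 * Qb) / 2 \<le> qf (Jm a s) v"
    proof (rule J_lower_aff)
      fix \<tau> :: real assume t: "\<tau> \<in> {0..1}"
      have "Qb - qf (H (a + \<tau> *\<^sub>R s)) v \<le> M * ((1 - \<tau>) * r) * qf (H (a + \<tau> *\<^sub>R s)) v"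
        using ssc_qf[of "a + s" v "a + \<tau> *\<^sub>R s" a "a + \<tau> *\<^sub>R s"] ln4[OF t] Qb_def by simp
      then have "Qb \<le> (1 + 2 * m * (1 - \<tau>)) * qf (H (a + \<tau> *\<^sub>R s)) v" unfolding m by (simp add: algebra_simps)
      from lower_from[OF this Q0(2) _ m0] t m0
      have "(1 / (1 + m) - (2 * m * (1 - \<tau>) - m) / (1 + m)\<^sup>2) * Qb \<le> qf (H (a + \<tau> *\<^sub>R s)) v" by simp
      moreover have "(1 / (1 + m) - (2 * m * (1 - \<tau>) - m) / (1 + m)\<^sup>2) * Qb
          = (1 / (1 + m) - m / (1 + m)\<^sup>2) * Qb + (2 * m / (1 + m)\<^sup>2 * Qb) * \<tau>"
        by (rule aff_id2)
      ultimately show "(1 / (1 + m) - m / (1 + m)\<^sup>2) * Qb + (2 * m / (1 + m)\<^sup>2 * Qb) * \<tau> \<le> qf (H (a + \<tau> *\<^sub>R s)) v"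
        by simp
    qed
    moreover have "(1 / (1 + m) - m / (1 + m)\<^sup>2) * Qb + (2 * m / (1 + m)\<^sup>2 * Qb) / 2 = Qb / (1 + m)"
      unfolding aff_id3 by simp
    ultimately have "Qb / (1 + m) \<le> qf (Jm a s) v" by simp
    then show ?thesis unfolding Qb_def using m1 by (simp add: field_simps)
  qed
qed

end



lemma mv_neg: "(A::real^'n^'m) *v (- v) = - (A *v v)"
  by (metis matrix_vector_mult_scaleR scaleR_minus1_left)

lemma qf_neg: "qf A (- v) = qf A v"
  using qf_scale_vec[of A "-1" v] by simp

lemma ln_32: "ln (3/2::real) \<le> 1/2"
  using ln_le_minus_one[of "3/2::real"] by simp

locale algo = sett f g H mu L M
  for f :: "real^'n \<Rightarrow> real" and g H mu L M +
  fixes x :: "nat \<Rightarrow> real^'n"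
    and G J :: "nat \<Rightarrow> real^'n^'n"
    and ubar :: "nat \<Rightarrow> real^'n"
  assumes G0: "G 0 = L *\<^sub>R mat 1"
    and step: "\<And>t. x (Suc t) = x t - matrix_inv (G t) *v g (x t)"
    and Jdef: "\<And>t. J t = integral {0..1}
                   (\<lambda>\<tau>::real. H (x t + \<tau> *\<^sub>R (x (Suc t) - x t)))"
    and udir: "\<And>t. greedy_dir (H (x (Suc t)))
                 ((1 + M * local_norm H (x t) (x (Suc t) - x t) / 2)\<^sup>2
                    *\<^sub>R BFGS (J t) (G t) (x (Suc t) - x t)) (ubar t)"
    and Gupd: "\<And>t. G (Suc t) = BFGS (H (x (Suc t)))
                 ((1 + M * local_norm H (x t) (x (Suc t) - x t) / 2)\<^sup>2
                    *\<^sub>R BFGS (J t) (G t) (x (Suc t) - x t)) (ubar t)"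
    and init: "newton_decrement g H (x 0) \<le> (ln (3/2) / 4) * mu / (M * L)"
    and nonzero: "\<And>t. g (x t) \<noteq> 0"
begin

definition kap where "kap = mu / L"
definition lam where "lam t = newton_decrement g H (x t)"

lemma kap: "0 < kap" "kap \<le> 1"
  unfolding kap_def using mu_pos mu_le_L L_pos by auto

lemma lam_eq: "lam t = sqrt (qf (matrix_inv (H (x t))) (g (x t)))"
  unfolding lam_def newton_decrement_def qf_def ..

lemma lam0: "lam t \<ge> 0"
  unfolding lam_eq using pdm_psd[OF pdm_inv_pdm[OF Hpdm]] by simp

lemma lam_sq: "(lam t)\<^sup>2 = qf (matrix_inv (H (x t))) (g (x t))"
  unfolding lam_eq using pdm_psd[OF pdm_inv_pdm[OF Hpdm]] by simp

lemma J_eq: "J t = Jm (x t) (x (Suc t) - x t)"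
  unfolding Jdef Jm_def ..

lemma xsuc: "x t + (x (Suc t) - x t) = x (Suc t)" by simp

lemma step_lemma:
  fixes t :: nat and E :: real
  defines "s \<equiv> x (Suc t) - x t"
  assumes pG: "pdm (G t)" and lo: "\<And>h. qf (H (x t)) h \<le> qf (G t) h"
    and hi: "\<And>h. qf (G t) h \<le> E * qf (H (x t)) h"
    and E1: "1 \<le> E" and Eb: "E * exp (2 * M * lam t) \<le> 3 / (2 * kap)"
    and lb: "M * lam t \<le> (ln (3/2) / 4) * kap"
  shows "theta (J t) (G t) s \<le> 1 - 2 * kap / 3"
    and "lam (Suc t) \<le> (1 - kap / 2) * lam t"
    and "pdm (G (Suc t))"
    and "\<And>h. qf (H (x (Suc t))) h \<le> qf (G (Suc t)) h"
    and "\<And>h. qf (G (Suc t)) h \<le> E * exp (2 * M * lam t) * qf (H (x (Suc t))) h"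
proof -
  define Ht where "Ht = H (x t)"
  define Hn where "Hn = H (x (Suc t))"
  define gt where "gt = g (x t)"
  define Gi where "Gi = matrix_inv (G t)"
  define Hi where "Hi = matrix_inv Ht"
  define r where "r = local_norm H (x t) s"
  define m where "m = M * r / 2"
  define c where "c = 1 - 2 * kap / 3"
  have iG: "invertible (G t)" using pdm_invertible[OF pG] .
  have pHt: "pdm Ht" unfolding Ht_def by (rule Hpdm)
  have pHn: "pdm Hn" unfolding Hn_def by (rule Hpdm)
  have sdef: "s = - (Gi *v gt)" unfolding s_def Gi_def gt_def using step[of t] by simp
  have Gs: "G t *v s = - gt" unfolding sdef mv_neg Gi_def using inv_vec[OF iG] by simp
  have gt0: "gt \<noteq> 0" unfolding gt_def by (rule nonzero)
  have s0: "s \<noteq> 0" using Gs gt0 by auto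
  have r0: "r \<ge> 0" unfolding r_def by (rule local_norm_nonneg)
  have "r\<^sup>2 = qf Ht s" unfolding r_def local_norm_def Ht_def qf_def
    using Hpsd[unfolded qf_def] by simp
  also have "\<dots> \<le> qf (G t) s" unfolding Ht_def by (rule lo)
  also have "\<dots> = qf Gi gt" unfolding sdef qf_neg Gi_def using pdm_inv_qf[OF pG] by simp
  also have "\<dots> \<le> 1 * qf Hi gt" unfolding Gi_def Hi_def
    by (rule inv_antitone[OF pHt pG]) (use lo Ht_def in auto)
  also have "\<dots> = (lam t)\<^sup>2" unfolding lam_sq Hi_def Ht_def gt_def by simp
  finally have "r\<^sup>2 \<le> (lam t)\<^sup>2" .
  then have rl: "r \<le> lam t" by (rule power2_le_imp_le[OF _ lam0])
  have m0: "m \<ge> 0" unfolding m_def using M_pos r0 by simp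
  have ml: "m \<le> M * lam t / 2" unfolding m_def using rl M_pos by (simp add: mult_left_mono)
  have ln32: "ln (3/2::real) \<le> 1/2" by (rule ln_32)
  have mk: "m \<le> kap / 12"
  proof -
    have "m \<le> (ln (3/2) / 4) * kap / 2" using ml lb by simp
    also have "\<dots> \<le> (1/2 / 4) * kap / 2" using ln32 kap by (simp add: mult_right_mono divide_right_mono)
    finally have "m \<le> (1/2 / 4) * kap / 2" .
    then show ?thesis using m0 by simp
  qed
  have m_exp: "1 + m \<le> exp (2 * M * lam t)"
  proof -
    have "1 + m \<le> exp m" by (rule exp_ge_add_one_self[of m, simplified add.commute])
    also have "\<dots> \<le> exp (2 * M * lam t)" using ml m0 M_pos lam0[of t]
      by (simp add: mult_nonneg_nonneg)
    finally show ?thesis .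
  qed
  have m_exp4: "(1 + m) ^ 4 \<le> exp (2 * M * lam t)"
  proof -
    have "(1 + m) ^ 4 \<le> (exp m) ^ 4" using m0 by (intro power_mono) (simp_all add: exp_ge_add_one_self[of m, simplified add.commute])
    also have "\<dots> = exp (4 * m)" by (simp add: exp_of_nat_mult[symmetric])
    also have "\<dots> \<le> exp (2 * M * lam t)" using ml by simp
    finally show ?thesis .
  qed
  define Jt where "Jt = J t"
  have Jt: "Jt = Jm (x t) s" unfolding Jt_def J_eq s_def ..
  have xs: "x t + s = x (Suc t)" unfolding s_def by simp
  have JB1: "qf Jt v \<le> (1 + m) * qf Ht v" for v
    using J_bounds(1)[where a="x t" and s=s and v=v] unfolding Jt[symmetric] m_def r_def Ht_def .
  have JB2: "qf Ht v \<le> (1 + m) * qf Jt v" for v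
    using J_bounds(2)[where a="x t" and s=s and v=v] unfolding Jt[symmetric] m_def r_def Ht_def .
  have JB3: "qf Hn v \<le> (1 + m) * qf Jt v" for v
    using J_bounds(3)[where a="x t" and s=s and v=v] unfolding Jt[symmetric] m_def r_def Hn_def xs .
  have JB4: "qf Jt v \<le> (1 + m) * qf Hn v" for v
    using J_bounds(4)[where a="x t" and s=s and v=v] unfolding Jt[symmetric] m_def r_def Hn_def xs .
  have pJ: "pdm Jt"
    unfolding pdm_def
  proof (intro conjI allI impI)
    show "symv Jt" unfolding Jt by (rule J_symv)
    fix v :: "real^'n" assume "v \<noteq> 0"
    then have "qf Ht v > 0" using pHt unfolding pdm_def by blast
    then have "0 < (1 + m) * qf Jt v" using JB2[of v] by linarith
    then show "qf Jt v > 0" using m0 by (simp add: zero_less_mult_iff)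
  qed
  have Jsu: "qf Jt s > 0" using pJ s0 unfolding pdm_def by blast
  have c01: "0 \<le> c" "c < 1" unfolding c_def using kap by auto
  have mc: "m \<le> c" unfolding c_def using mk kap by simp
  have Em: "E * (1 + m) \<le> 3 / (2 * kap)"
    using mult_left_mono[OF m_exp, of E] E1 Eb by linarith
  have thup: "qf Jt h \<le> (1 + c) * qf (G t) h" for h
  proof -
    have "qf Jt h \<le> (1 + m) * qf Ht h" by (rule JB1)
    also have "\<dots> \<le> (1 + m) * qf (G t) h" using lo[of h] m0 Ht_def by (simp add: mult_left_mono)
    also have "\<dots> \<le> (1 + c) * qf (G t) h" using mc pdm_psd[OF pG, of h] by (simp add: mult_right_mono)
    finally show ?thesis .
  qed
  have thlo: "(1 - c) * qf (G t) h \<le> qf Jt h" for h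
  proof -
    have "(1 - c) * qf (G t) h \<le> (1 - c) * (E * qf Ht h)"
      using hi[of h] c01 Ht_def by (simp add: mult_left_mono)
    also have "\<dots> \<le> (1 - c) * (E * ((1 + m) * qf Jt h))"
      using JB2[of h] c01 E1 by (simp add: mult_left_mono)
    also have "\<dots> = ((1 - c) * (E * (1 + m))) * qf Jt h" by simp
    also have "\<dots> \<le> 1 * qf Jt h"
    proof (rule mult_right_mono)
      have "(1 - c) * (E * (1 + m)) \<le> (1 - c) * (3 / (2 * kap))"
        using Em c01 by (intro mult_left_mono) simp_all
      also have "\<dots> = 1" unfolding c_def using kap by (simp add: field_simps)
      finally show "(1 - c) * (E * (1 + m)) \<le> 1" .
      show "0 \<le> qf Jt h" by (rule pdm_psd[OF pJ])
    qed
    finally show ?thesis by simp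
  qed
  show "theta (J t) (G t) s \<le> 1 - 2 * kap / 3"
    using theta_le[OF pJ pG c01 thup thlo] unfolding Jt_def c_def .
  have core: "qf (matrix_inv Jt) ((G t - Jt) *v s) \<le> c\<^sup>2 * qf (matrix_inv Jt) (G t *v s)"
    by (rule theta_core[OF pJ pG c01 thup thlo])
  have gn: "g (x (Suc t)) = - ((G t - Jt) *v s)"
  proof -
    have "g (x (Suc t)) = gt + Jt *v s" using J_ftc[of "x t" s] Jt xsuc[of t] gt_def s_def
      by (metis diff_add_cancel add.commute)
    also have "\<dots> = - ((G t - Jt) *v s)" using Gs by (simp add: matrix_vector_mult_diff_rdistrib)
    finally show ?thesis .
  qed
  define X where "X = qf (matrix_inv Jt) (g (x (Suc t)))"
  define Y where "Y = qf (matrix_inv Jt) gt"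
  have A1: "(lam (Suc t))\<^sup>2 \<le> (1 + m) * X"
    unfolding lam_sq Hn_def[symmetric] X_def
    by (rule inv_antitone[OF pJ pHn]) (use m0 JB4 in auto)
  have A2: "X \<le> c\<^sup>2 * Y"
    using core unfolding X_def Y_def gn qf_neg Gs .
  have A3: "Y \<le> (1 + m) * (lam t)\<^sup>2"
    unfolding Y_def lam_sq Ht_def[symmetric] gt_def[symmetric]
    by (rule inv_antitone[OF pHt pJ]) (use m0 JB2 in auto)
  have "(lam (Suc t))\<^sup>2 \<le> (1 + m) * (c\<^sup>2 * ((1 + m) * (lam t)\<^sup>2))"
  proof -
    have "c\<^sup>2 * Y \<le> c\<^sup>2 * ((1 + m) * (lam t)\<^sup>2)" using A3 by (intro mult_left_mono) simp_all
    then have "X \<le> c\<^sup>2 * ((1 + m) * (lam t)\<^sup>2)" using A2 by linarith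
    then have "(1 + m) * X \<le> (1 + m) * (c\<^sup>2 * ((1 + m) * (lam t)\<^sup>2))" using m0 by (intro mult_left_mono) simp_all
    then show ?thesis using A1 by linarith
  qed
  moreover have "(1 + m) * (c\<^sup>2 * ((1 + m) * (lam t)\<^sup>2)) = ((1 + m) * c * lam t)\<^sup>2" by algebra
  ultimately have "(lam (Suc t))\<^sup>2 \<le> ((1 + m) * c * lam t)\<^sup>2" by simp
  moreover have nn: "0 \<le> (1 + m) * c * lam t" using m0 c01 lam0[of t] by simp
  ultimately have l1: "lam (Suc t) \<le> (1 + m) * c * lam t" by (rule power2_le_imp_le)
  have "(1 + m) * c \<le> 1 - kap / 2"
  proof -
    have "(1 + m) * c = c + m * c" by (simp add: algebra_simps)
    also have "\<dots> \<le> c + m" using m0 c01 by (simp add: mult_left_le)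
    also have "\<dots> \<le> 1 - kap / 2" unfolding c_def using mk kap(1) by linarith
    finally show ?thesis .
  qed
  then show "lam (Suc t) \<le> (1 - kap / 2) * lam t"
    using l1 lam0[of t] by (meson mult_right_mono order_trans)
  define B where "B = BFGS Jt (G t) s"
  have sJ: "symv Jt" using pJ pdm_def by blast
  have sG: "symv (G t)" using pG pdm_def by blast
  have Bb: "(1 / (1 + m)) * qf Jt v \<le> qf B v" "qf B v \<le> (E * (1 + m)) * qf Jt v" for v
  proof -
    have a1: "0 < 1 / (1 + m)" "1 / (1 + m) \<le> 1" "1 \<le> E * (1 + m)"
      using m0 apply simp_all
      using mult_mono[of 1 E 1 "1 + m"] E1 m0 by simp
    have b1: "(1 / (1 + m)) * qf Jt h \<le> qf (G t) h" for h
    proof -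
      have m1: "1 + m > 0" using m0 by simp
      have "(1 + m) * qf Ht h \<le> (1 + m) * qf (G t) h" using lo[of h] m0 Ht_def by (intro mult_left_mono) auto
      then have "qf Jt h \<le> (1 + m) * qf (G t) h" using JB1[of h] by linarith
      then show ?thesis using m1 by (simp add: field_simps)
    qed
    have b2: "qf (G t) h \<le> (E * (1 + m)) * qf Jt h" for h
    proof -
      have "qf (G t) h \<le> E * qf Ht h" using hi Ht_def by simp
      also have "\<dots> \<le> E * ((1 + m) * qf Jt h)" using JB2 E1 by (simp add: mult_left_mono)
      finally show ?thesis by simp
    qed
    note BF = BFGS_bounds[OF sJ sG pdm_psd[OF pJ] Jsu a1 b1 b2, of v]
    show "(1 / (1 + m)) * qf Jt v \<le> qf B v" using BF(1) B_def by simp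
    show "qf B v \<le> (E * (1 + m)) * qf Jt v" using BF(2) B_def by simp
  qed
  have sB: "symv B" unfolding B_def by (rule BFGS_symv[OF sJ sG])
  define Gh where "Gh = (1 + m)\<^sup>2 *\<^sub>R B"
  have Gh_eq: "(1 + M * local_norm H (x t) (x (Suc t) - x t) / 2)\<^sup>2 *\<^sub>R BFGS (J t) (G t) (x (Suc t) - x t) = Gh"
    unfolding Gh_def B_def m_def r_def s_def Jt_def ..
  have sGh: "symv Gh" unfolding Gh_def by (rule symv_scale[OF sB])
  have Gh_lo: "qf Hn h \<le> qf Gh h" for h
  proof -
    have "qf Hn h \<le> (1 + m) * qf Jt h" by (rule JB3)
    also have "\<dots> = (1 + m)\<^sup>2 * ((1 / (1 + m)) * qf Jt h)" using m0 by (simp add: field_simps power2_eq_square)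
    also have "\<dots> \<le> (1 + m)\<^sup>2 * qf B h" using Bb(1)[of h] by (intro mult_left_mono) simp_all
    finally show ?thesis unfolding Gh_def qf_scale .
  qed
  have Gh_hi: "qf Gh h \<le> (E * (1 + m) ^ 4) * qf Hn h" for h
  proof -
    have "qf Gh h = (1 + m)\<^sup>2 * qf B h" unfolding Gh_def qf_scale ..
    also have "\<dots> \<le> (1 + m)\<^sup>2 * ((E * (1 + m)) * qf Jt h)" using Bb(2)[of h] by (intro mult_left_mono) simp_all
    also have "\<dots> \<le> (1 + m)\<^sup>2 * ((E * (1 + m)) * ((1 + m) * qf Hn h))"
      using JB4[of h] m0 E1 by (intro mult_left_mono) simp_all
    also have "\<dots> = (E * (1 + m) ^ 4) * qf Hn h" by (simp add: power2_eq_square power4_eq_xxxx)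
    finally show ?thesis .
  qed
  obtain i where ui: "ubar t = axis i 1" using udir[of t] unfolding greedy_dir_def by blast
  have u0: "qf Hn (ubar t) > 0" using pHn unfolding pdm_def ui by (simp add: axis_eq_0_iff)
  have Gsuc: "G (Suc t) = BFGS Hn Gh (ubar t)" unfolding Gupd Gh_eq Hn_def ..
  have sHn: "symv Hn" using pHn pdm_def by blast
  have eta1: "1 \<le> E * (1 + m) ^ 4"
  proof -
    have "1 \<le> (1 + m) ^ 4" using m0 by (simp add: one_le_power)
    then show ?thesis using mult_mono[of 1 E 1 "(1 + m) ^ 4"] E1 by simp
  qed
  have lo1: "1 * qf Hn h \<le> qf Gh h" for h using Gh_lo[of h] by simp
  note BF2 = BFGS_bounds[OF sHn sGh pdm_psd[OF pHn] u0 zero_less_one order_refl eta1 lo1 Gh_hi]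
  have G1lo: "qf Hn h \<le> qf (G (Suc t)) h" for h
    using BF2(1)[of h] Gh_lo Gsuc by simp
  have G1hi: "qf (G (Suc t)) h \<le> (E * (1 + m) ^ 4) * qf Hn h" for h
    using BF2(2)[of h] Gh_hi Gsuc by simp
  show "qf (H (x (Suc t))) h \<le> qf (G (Suc t)) h" for h using G1lo Hn_def by simp
  show "qf (G (Suc t)) h \<le> E * exp (2 * M * lam t) * qf (H (x (Suc t))) h" for h
  proof -
    have "qf (G (Suc t)) h \<le> (E * (1 + m) ^ 4) * qf Hn h" by (rule G1hi)
    also have "\<dots> \<le> (E * exp (2 * M * lam t)) * qf Hn h"
      using m_exp4 E1 pdm_psd[OF pHn, of h] by (intro mult_right_mono mult_left_mono) simp_all
    finally show ?thesis using Hn_def by simp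
  qed
  show "pdm (G (Suc t))"
    unfolding pdm_def
  proof (intro conjI allI impI)
    show "symv (G (Suc t))" unfolding Gsuc by (rule BFGS_symv[OF sHn sGh])
    fix v :: "real^'n" assume "v \<noteq> 0"
    then have "qf Hn v > 0" using pHn unfolding pdm_def by blast
    then show "qf (G (Suc t)) v > 0" using G1lo[of v] by simp
  qed
qed

end



context algo begin

definition rho where "rho = 1 - kap / 2"
definition S where "S n = (\<Sum>i<n. rho ^ i)"
definition EE where "EE n = (1 / kap) * exp (2 * M * lam 0 * S n)"

lemma rho: "0 < rho" "rho < 1" unfolding rho_def using kap by auto

lemma S_bound: "S n \<le> 2 / kap"
proof -
  have "S n = (1 - rho ^ n) / (1 - rho)" unfolding S_def using rho by (simp add: sum_gp_strict)
  also have "\<dots> \<le> 1 / (1 - rho)" using rho by (intro divide_right_mono) simp_all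
  also have "\<dots> = 2 / kap" unfolding rho_def using kap by simp
  finally show ?thesis .
qed

lemma S_nonneg: "S n \<ge> 0" unfolding S_def using rho by (intro sum_nonneg) simp

lemma S_Suc: "S (Suc n) = S n + rho ^ n" unfolding S_def by simp

lemma Mlam0: "M * lam 0 \<le> (ln (3/2) / 4) * kap"
proof -
  have "lam 0 \<le> (ln (3/2) / 4) * mu / (M * L)" using init unfolding lam_def .
  then have "M * lam 0 \<le> M * ((ln (3/2) / 4) * mu / (M * L))" using M_pos by (intro mult_left_mono) simp_all
  also have "\<dots> = (ln (3/2) / 4) * kap" unfolding kap_def using M_pos by (simp add: field_simps)
  finally show ?thesis .
qed

lemma EE1: "1 \<le> EE n"
proof -
  have "1 \<le> 1 / kap" using kap by simp
  moreover have "1 \<le> exp (2 * M * lam 0 * S n)" using M_pos lam0[of 0] S_nonneg[of n] by simp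
  ultimately show ?thesis unfolding EE_def using mult_mono[of 1 "1/kap" 1] by fastforce
qed

definition Inv where "Inv n \<longleftrightarrow> pdm (G n) \<and> (\<forall>h. qf (H (x n)) h \<le> qf (G n) h)
   \<and> (\<forall>h. qf (G n) h \<le> EE n * qf (H (x n)) h) \<and> (\<forall>i\<le>n. lam i \<le> rho ^ i * lam 0)"

lemma Inv0: "Inv 0"
  unfolding Inv_def
proof (intro conjI allI impI)
  have qG: "qf (G 0) h = L * (norm h)\<^sup>2" for h unfolding G0 qf_scale qf_mat1 ..
  show "pdm (G 0)" unfolding pdm_def
  proof (intro conjI allI impI)
    show "symv (G 0)" unfolding G0 by (rule symv_scale[OF symv_mat1])
    fix v :: "real^'n" assume "v \<noteq> 0" then show "qf (G 0) v > 0" unfolding qG using L_pos by simp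
  qed
  fix h :: "real^'n"
  show "qf (H (x 0)) h \<le> qf (G 0) h" unfolding qG by (rule Hup)
  have "qf (G 0) h = (1 / kap) * (mu * (norm h)\<^sup>2)" unfolding qG kap_def using mu_pos by simp
  also have "\<dots> \<le> (1 / kap) * qf (H (x 0)) h" using Hlo kap by (intro mult_left_mono) simp_all
  finally show "qf (G 0) h \<le> EE 0 * qf (H (x 0)) h" unfolding EE_def S_def by simp
next
  fix i :: nat assume "i \<le> 0" then show "lam i \<le> rho ^ i * lam 0" by simp
qed

lemma Inv_step:
  assumes "Inv n"
  shows "Inv (Suc n)" "theta (J n) (G n) (x (Suc n) - x n) \<le> 1 - 2 * kap / 3"
proof -
  have pG: "pdm (G n)" and lo: "\<And>h. qf (H (x n)) h \<le> qf (G n) h"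
    and hi: "\<And>h. qf (G n) h \<le> EE n * qf (H (x n)) h" and lb: "\<And>i. i \<le> n \<Longrightarrow> lam i \<le> rho ^ i * lam 0"
    using assms unfolding Inv_def by auto
  have ln: "lam n \<le> rho ^ n * lam 0" using lb by simp
  have rn: "rho ^ n \<le> 1" "0 \<le> rho ^ n" using rho by (simp_all add: power_le_one)
  have l0: "lam 0 \<ge> 0" by (rule lam0)
  have Mln: "M * lam n \<le> M * lam 0 * rho ^ n" using ln M_pos by (simp add: mult_left_mono algebra_simps)
  have lbm: "M * lam n \<le> (ln (3/2) / 4) * kap"
  proof -
    have "M * lam 0 * rho ^ n \<le> M * lam 0" using rn M_pos l0 by (simp add: mult_left_le)
    then show ?thesis using Mln Mlam0 by linarith
  qed
  have ex: "EE n * exp (2 * M * lam n) \<le> EE (Suc n)"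
  proof -
    have "exp (2 * M * lam n) \<le> exp (2 * M * lam 0 * rho ^ n)" using Mln by simp
    then have "EE n * exp (2 * M * lam n) \<le> EE n * exp (2 * M * lam 0 * rho ^ n)"
      using EE1[of n] by (intro mult_left_mono) simp_all
    also have "\<dots> = EE (Suc n)" unfolding EE_def S_Suc by (simp add: algebra_simps exp_add)
    finally show ?thesis .
  qed
  have EEb: "EE (Suc n) \<le> 3 / (2 * kap)"
  proof -
    have "2 * M * lam 0 * S (Suc n) \<le> 2 * M * lam 0 * (2 / kap)"
      using S_bound M_pos l0 by (intro mult_left_mono) simp_all
    also have "\<dots> = 4 * (M * lam 0) / kap" by simp
    also have "\<dots> \<le> 4 * ((ln (3/2) / 4) * kap) / kap" using Mlam0 kap by (intro divide_right_mono) simp_all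
    also have "\<dots> = ln (3/2)" using kap by simp
    finally have "2 * M * lam 0 * S (Suc n) \<le> ln (3/2)" .
    then have "exp (2 * M * lam 0 * S (Suc n)) \<le> exp (ln (3/2))" by (simp only: exp_le_cancel_iff)
    then have "exp (2 * M * lam 0 * S (Suc n)) \<le> 3/2" by simp
    then have "(1 / kap) * exp (2 * M * lam 0 * S (Suc n)) \<le> (1 / kap) * (3/2)" using kap by (intro mult_left_mono) simp_all
    then show ?thesis unfolding EE_def by simp
  qed
  note SL = step_lemma[OF pG lo hi EE1 order_trans[OF ex EEb] lbm]
  show "theta (J n) (G n) (x (Suc n) - x n) \<le> 1 - 2 * kap / 3" by (rule SL(1))
  show "Inv (Suc n)" unfolding Inv_def
  proof (intro conjI allI impI)
    show "pdm (G (Suc n))" by (rule SL(3))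
    fix h :: "real^'n"
    show "qf (H (x (Suc n))) h \<le> qf (G (Suc n)) h" by (rule SL(4))
    have "qf (G (Suc n)) h \<le> EE n * exp (2 * M * lam n) * qf (H (x (Suc n))) h" by (rule SL(5))
    also have "\<dots> \<le> EE (Suc n) * qf (H (x (Suc n))) h" using ex Hpsd by (intro mult_right_mono) simp_all
    finally show "qf (G (Suc n)) h \<le> EE (Suc n) * qf (H (x (Suc n))) h" .
  next
    fix i assume i: "i \<le> Suc n"
    show "lam i \<le> rho ^ i * lam 0"
    proof (cases "i = Suc n")
      case True
      have "lam (Suc n) \<le> rho * lam n" using SL(2) unfolding rho_def .
      also have "\<dots> \<le> rho * (rho ^ n * lam 0)" using ln rho by (intro mult_left_mono) simp_all
      finally show ?thesis using True by simp
    next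
      case False then show ?thesis using lb i by simp
    qed
  qed
qed

lemma Inv_all: "Inv n"
  by (induction n) (use Inv0 Inv_step in auto)

lemma main: "\<forall>t. theta (J t) (G t) (x (Suc t) - x t) \<le> 1 - 2 * mu / (3 * L)
           \<and> newton_decrement g H (x t) \<le> (1 - mu / (2 * L)) ^ t * newton_decrement g H (x 0)"
proof
  fix t
  have "theta (J t) (G t) (x (Suc t) - x t) \<le> 1 - 2 * kap / 3" by (rule Inv_step(2)[OF Inv_all])
  moreover have "lam t \<le> rho ^ t * lam 0" using Inv_all[of t] unfolding Inv_def by auto
  moreover have "2 * kap / 3 = 2 * mu / (3 * L)" "rho = 1 - mu / (2 * L)" unfolding kap_def rho_def by simp_all
  ultimately show "theta (J t) (G t) (x (Suc t) - x t) \<le> 1 - 2 * mu / (3 * L)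
           \<and> newton_decrement g H (x t) \<le> (1 - mu / (2 * L)) ^ t * newton_decrement g H (x 0)"
    unfolding lam_def by simp
qed

end

theorem theorem3:
  fixes f :: "real^'n \<Rightarrow> real"
    and g :: "real^'n \<Rightarrow> real^'n"
    and H :: "real^'n \<Rightarrow> real^'n^'n"
    and mu L M :: real
    and x :: "nat \<Rightarrow> real^'n"
    and G J :: "nat \<Rightarrow> real^'n^'n"
    and ubar :: "nat \<Rightarrow> real^'n"
  assumes grad: "\<And>y. (f has_derivative (\<lambda>h. g y \<bullet> h)) (at y)"
    and hess: "\<And>y. (g has_derivative (\<lambda>h. H y *v h)) (at y)"
    and mu_pos: "0 < mu" and mu_le_L: "mu \<le> L" and M_pos: "0 < M"
    and sconv: "strongly_convex mu f"
    and lip: "L-lipschitz_on UNIV g"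
    and ssc: "strongly_self_concordant M H"
    and G0: "G 0 = L *\<^sub>R mat 1"
    and step: "\<And>t. x (Suc t) = x t - matrix_inv (G t) *v g (x t)"
    and Jdef: "\<And>t. J t = integral {0..1}
                   (\<lambda>\<tau>::real. H (x t + \<tau> *\<^sub>R (x (Suc t) - x t)))"
    and udir: "\<And>t. greedy_dir (H (x (Suc t)))
                 ((1 + M * local_norm H (x t) (x (Suc t) - x t) / 2)\<^sup>2
                    *\<^sub>R BFGS (J t) (G t) (x (Suc t) - x t)) (ubar t)"
    and Gupd: "\<And>t. G (Suc t) = BFGS (H (x (Suc t)))
                 ((1 + M * local_norm H (x t) (x (Suc t) - x t) / 2)\<^sup>2
                    *\<^sub>R BFGS (J t) (G t) (x (Suc t) - x t)) (ubar t)"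
    and init: "newton_decrement g H (x 0) \<le> (ln (3/2) / 4) * mu / (M * L)"
    and nonzero: "\<And>t. g (x t) \<noteq> 0"
  shows "\<forall>t. theta (J t) (G t) (x (Suc t) - x t) \<le> 1 - 2 * mu / (3 * L)
           \<and> newton_decrement g H (x t) \<le> (1 - mu / (2 * L)) ^ t * newton_decrement g H (x 0)"
proof -
  interpret algo f g H mu L M x G J ubar
    by unfold_locales (fact assms)+
  show ?thesis by (rule main)
qed


end
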